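(* A function $f(x)=\sum_{m\ge0}x^ma_m$ in $\mathcal{SM}(\mathbb{R}^{n+1})$, with $a_m\in\mathbb{R}_n$ for $m\in\mathbb{N}$, belongs to $\mathcal{F}(\mathbb{R}^{n+1})$ if and only if $\sum_{m\ge0}|a_m|^2\,m!<\infty$.
   Context: $\mathbb{R}_n$ is the real Clifford algebra generated by $e_1,\dots,e_n$ with $e_ie_j+e_je_i=-2\delta_{ij}$; elements are $a=\sum_Ae_Ax_A$ over increasing multi-indices $A$, with $e_\emptyset=1$, and $|a|^2=\sum_Ax_A^2$. Paravectors $x=x_0+\sum_{j=1}^nx_je_j$ are identified with points of $\mathbb{R}^{n+1}$, $|x|^2=\sum_{j=0}^nx_j^2$. $\mathbb{S}=\{e_1x_1+\dots+e_nx_n:x_1^2+\dots+x_n^2=1\}$; for $I\in\mathbb{S}$, $\mathbb{C}_I=\mathbb{R}+I\mathbb{R}$. A real differentiable $f:\mathbb{R}^{n+1}\to\mathbb{R}_n$ is (left) slice monogenic if for every $I\in\mathbb{S}$ its restriction $f_I$ to $\mathbb{C}_I$ satisfies $\frac12\left(\frac{\partial}{\partial u}+I\frac{\partial}{\partial v}\right)f_I(u+Iv)=0$; $\mathcal{SM}(\mathbb{R}^{n+1})$ is the set of such functions on $\mathbb{R}^{n+1}$. For fixed $I\in\mathbb{S}$, the Clifford-Fock space is $\mathcal{F}(\mathbb{R}^{n+1})=\{f\in\mathcal{SM}(\mathbb{R}^{n+1}):\int_{\mathbb{C}_I}e^{-|x|^2}|f_I(x)|^2\,d\sigma(u,v)<\infty\}$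 with $x=u+Iv$, $d\sigma(u,v)=\frac1\pi du\,dv$. *)

theory Defs
  imports "HOL-Analysis.Analysis"
begin

text \<open>Elements of the real Clifford algebra R_n are represented by their coefficient
  functions A \<mapsto> x_A over multi-indices A (finite subsets of {1..n}).
  Coefficients at sets not contained in {1..n} are irrelevant (zero for genuine elements).\<close>

type_synonym cliff = "nat set \<Rightarrow> real"

definition cliff_el :: "nat \<Rightarrow> cliff \<Rightarrow> bool" where
  "cliff_el n a \<longleftrightarrow> (\<forall>A. \<not> A \<subseteq> {1..n} \<longrightarrow> a A = 0)"

definition cone :: cliff where
  "cone = (\<lambda>A. if A = {} then 1 else 0)"

text \<open>Sign of e_A e_B = sign * e_(A symdiff B), from e_i e_j = - e_j e_i (i \<noteq> j), e_i^2 = -1.\<close>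
definition csign :: "nat set \<Rightarrow> nat set \<Rightarrow> real" where
  "csign A B = (-1) ^ (card {(i, j). i \<in> A \<and> j \<in> B \<and> j < i} + card (A \<inter> B))"

definition cmult :: "nat \<Rightarrow> cliff \<Rightarrow> cliff \<Rightarrow> cliff" where
  "cmult n a b = (\<lambda>C. \<Sum>A\<in>Pow {1..n}. \<Sum>B\<in>Pow {1..n}.
      if (A - B) \<union> (B - A) = C then csign A B * a A * b B else 0)"

definition cpow :: "nat \<Rightarrow> cliff \<Rightarrow> nat \<Rightarrow> cliff" where
  "cpow n x m = (cmult n x ^^ m) cone"

definition cnorm2 :: "nat \<Rightarrow> cliff \<Rightarrow> real" where
  "cnorm2 n a = (\<Sum>A\<in>Pow {1..n}. (a A)^2)"

definition para :: "nat \<Rightarrow> (nat \<Rightarrow> real) \<Rightarrow> cliff" where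
  "para n x = (\<lambda>A. x 0 * (if A = {} then 1 else 0) + (\<Sum>j=1..n. x j * (if A = {j} then 1 else 0)))"

definition sphS :: "nat \<Rightarrow> cliff set" where
  "sphS n = {para n x | x. x 0 = 0 \<and> (\<Sum>j=1..n. (x j)^2) = 1}"

definition slicept :: "cliff \<Rightarrow> real \<Rightarrow> real \<Rightarrow> cliff" where
  "slicept I u v = (\<lambda>A. u * cone A + v * I A)"

text \<open>Real (Frechet) differentiability of a map R^{n+1} \<rightarrow> R_n, given in coordinates
  x_0,...,x_n, written out componentwise.\<close>
definition real_diff :: "nat \<Rightarrow> ((nat \<Rightarrow> real) \<Rightarrow> cliff) \<Rightarrow> bool" where
  "real_diff n g \<longleftrightarrow> (\<forall>p. \<exists>D :: nat \<Rightarrow> cliff. \<forall>A. \<forall>\<epsilon>>0. \<exists>\<delta>>0. \<forall>h.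
      (\<forall>j>n. h j = 0) \<and> sqrt (\<Sum>j\<le>n. (h j)^2) < \<delta> \<longrightarrow>
      \<bar>g (\<lambda>j. p j + h j) A - g p A - (\<Sum>j\<le>n. h j * D j A)\<bar> \<le> \<epsilon> * sqrt (\<Sum>j\<le>n. (h j)^2))"

definition slice_monogenic :: "nat \<Rightarrow> (cliff \<Rightarrow> cliff) \<Rightarrow> bool" where
  "slice_monogenic n f \<longleftrightarrow> real_diff n (\<lambda>x. f (para n x)) \<and>
     (\<forall>I\<in>sphS n. \<forall>u v. \<exists>Du Dv :: cliff.
        (\<forall>A. ((\<lambda>t. f (slicept I t v) A) has_real_derivative Du A) (at u)) \<and>
        (\<forall>A. ((\<lambda>t. f (slicept I u t) A) has_real_derivative Dv A) (at v)) \<and>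
        (\<forall>A. (1/2) * (Du A + cmult n I Dv A) = 0))"

text \<open>Clifford-Fock space for fixed I, with d\<sigma> = (1/pi) du dv and |u + I v|^2 = u^2 + v^2.\<close>
definition fock :: "nat \<Rightarrow> cliff \<Rightarrow> (cliff \<Rightarrow> cliff) \<Rightarrow> bool" where
  "fock n I f \<longleftrightarrow> slice_monogenic n f \<and>
     (\<integral>\<^sup>+ z. ennreal (exp (- (fst z ^ 2 + snd z ^ 2)) * cnorm2 n (f (slicept I (fst z) (snd z))) / pi)
        \<partial>(lborel :: (real \<times> real) measure)) < \<infinity>"

end

theory Submission
  imports Defs "HOL-Probability.Probability"
begin


lemma gauss_moment:
  "(\<integral>\<^sup>+ x. ennreal (exp (- x\<^sup>2) * x ^ (2*k)) \<partial>lborel) = ennreal (sqrt pi * (fact (2*k) / (4 ^ k * fact k)))"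
proof -
  have hb: "has_bochner_integral lborel (\<lambda>x. std_normal_density x * x ^ (2*k)) (fact (2*k) / (2 ^ k * fact k))"
    by (rule std_normal_moment_even)
  have nonneg: "\<And>x. 0 \<le> std_normal_density x * x ^ (2*k)"
    by (simp add: power_mult)
  have nn: "(\<integral>\<^sup>+ x. ennreal (std_normal_density x * x ^ (2*k)) \<partial>lborel) = ennreal (fact (2*k) / (2 ^ k * fact k))"
    using nn_integral_eq_integral[OF integrable.intros[OF hb]] nonneg
      has_bochner_integral_integral_eq[OF hb] by simp
  have aff: "(\<integral>\<^sup>+ x. ennreal (std_normal_density x * x ^ (2*k)) \<partial>lborel) =
     \<bar>sqrt 2\<bar> * (\<integral>\<^sup>+ x. ennreal (std_normal_density (0 + sqrt 2 * x) * (0 + sqrt 2 * x) ^ (2*k)) \<partial>lborel)"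
    by (rule nn_integral_real_affine) auto
  have pt: "exp (- x\<^sup>2) * x ^ (2*k) = (sqrt pi / 2 ^ k) * (sqrt 2 * (std_normal_density (0 + sqrt 2 * x) * (0 + sqrt 2 * x) ^ (2*k)))" for x :: real
  proof -
    have a: "(sqrt 2 * x) ^ (2*k) = 2 ^ k * x ^ (2*k)"
      by (simp add: power_mult power_mult_distrib)
    have b: "sqrt 2 * (1 / sqrt (2 * pi)) = 1 / sqrt pi"
      by (simp add: real_sqrt_mult field_simps)
    have d: "std_normal_density (sqrt 2 * x) = (1/sqrt(2*pi)) * exp (- x\<^sup>2)"
      unfolding std_normal_density_def by (simp add: power_mult_distrib)
    have "sqrt 2 * (std_normal_density (sqrt 2 * x) * (sqrt 2 * x) ^ (2*k)) = (sqrt 2 * (1 / sqrt (2 * pi))) * exp (- x\<^sup>2) * 2 ^ k * x ^ (2*k)"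
      unfolding d a by (simp add: ac_simps)
    also have "\<dots> = (1 / sqrt pi) * exp (- x\<^sup>2) * 2 ^ k * x ^ (2*k)" unfolding b ..
    finally have "sqrt 2 * (std_normal_density (sqrt 2 * x) * (sqrt 2 * x) ^ (2*k)) = (1 / sqrt pi) * exp (- x\<^sup>2) * 2 ^ k * x ^ (2*k)" .
    then have "(sqrt pi / 2 ^ k) * (sqrt 2 * (std_normal_density (sqrt 2 * x) * (sqrt 2 * x) ^ (2*k)))
       = (sqrt pi / 2 ^ k) * ((1 / sqrt pi) * exp (- x\<^sup>2) * 2 ^ k * x ^ (2*k))" by simp
    also have "\<dots> = exp (- x\<^sup>2) * x ^ (2*k)" by simp
    finally show ?thesis by simp
  qed
  have "(\<integral>\<^sup>+ x. ennreal (exp (- x\<^sup>2) * x ^ (2*k)) \<partial>lborel) =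
        (\<integral>\<^sup>+ x. ennreal (sqrt pi / 2 ^ k) * (ennreal (sqrt 2) * ennreal (std_normal_density (0 + sqrt 2 * x) * (0 + sqrt 2 * x) ^ (2*k))) \<partial>lborel)"
    apply (intro nn_integral_cong)
    apply (subst pt)
    apply (simp add: ennreal_mult'[symmetric] ennreal_mult[symmetric])
    done
  also have "\<dots> = ennreal (sqrt pi / 2 ^ k) * (ennreal (sqrt 2) * (\<integral>\<^sup>+ x. ennreal (std_normal_density (0 + sqrt 2 * x) * (0 + sqrt 2 * x) ^ (2*k)) \<partial>lborel))"
    by (simp add: nn_integral_cmult)
  also have "\<dots> = ennreal (sqrt pi / 2 ^ k) * ennreal (fact (2*k) / (2 ^ k * fact k))"
    using aff nn by simp
  also have "\<dots> = ennreal (sqrt pi * (fact (2*k) / (4 ^ k * fact k)))"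
    by (simp add: ennreal_mult[symmetric] power_mult_distrib[symmetric] field_simps)
  finally show ?thesis .
qed

definition ga :: "nat \<Rightarrow> real" where "ga i = fact (2*i) / (4 ^ i * fact i)"

lemma ga_Suc: "ga (Suc i) = (real i + 1/2) * ga i"
proof -
  have f2: "fact (2 * Suc i) = (2 * real i + 2) * (2 * real i + 1) * (fact (2*i) :: real)"
    by (simp add: algebra_simps)
  have f1: "fact (Suc i) = (real i + 1) * (fact i :: real)" by simp
  have "ga (Suc i) = ((2 * real i + 2) * (2 * real i + 1) / (4 * (real i + 1))) * (fact (2*i) / (4 ^ i * fact i))"
    unfolding ga_def f2 f1 by (simp add: ac_simps)
  also have "(2 * real i + 2) * (2 * real i + 1) / (4 * (real i + 1)) = real i + 1/2"
    by (simp add: field_simps)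
  finally show ?thesis unfolding ga_def .
qed

lemma ga_conv: "(\<Sum>i\<le>m. real (m choose i) * ga i * ga (m - i)) = fact m"
proof (induction m)
  case 0
  then show ?case by (simp add: ga_def)
next
  case (Suc m)
  define F where "F i = ga i * ga (Suc m - i)" for i
  have "(\<Sum>i\<le>Suc m. real (Suc m choose i) * ga i * ga (Suc m - i)) = (\<Sum>i\<le>Suc m. real (Suc m choose i) * F i)"
    unfolding F_def by (simp add: ac_simps)
  also have "\<dots> = F 0 + (\<Sum>i\<le>m. real (Suc m choose Suc i) * F (Suc i))"
    by (subst sum.atMost_Suc_shift) simp
  also have "\<dots> = F 0 + (\<Sum>i\<le>m. real (m choose i) * F (Suc i)) + (\<Sum>i\<le>m. real (m choose Suc i) * F (Suc i))"
    by (simp add: sum.distrib algebra_simps)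
  also have "(\<Sum>i\<le>m. real (m choose Suc i) * F (Suc i)) = (\<Sum>i\<le>Suc m. real (m choose i) * F i) - F 0"
    by (subst sum.atMost_Suc_shift) simp
  also have "(\<Sum>i\<le>Suc m. real (m choose i) * F i) = (\<Sum>i\<le>m. real (m choose i) * F i)"
    by simp
  finally have e: "(\<Sum>i\<le>Suc m. real (Suc m choose i) * ga i * ga (Suc m - i)) =
      (\<Sum>i\<le>m. real (m choose i) * (F (Suc i) + F i))"
    by (simp add: sum.distrib algebra_simps)
  have "\<And>i. i \<le> m \<Longrightarrow> F (Suc i) + F i = (real m + 1) * (ga i * ga (m - i))"
  proof -
    fix i assume i: "i \<le> m"
    have "Suc m - i = Suc (m - i)" using i by simp
    then have "F i = ga i * ((real (m - i) + 1/2) * ga (m - i))" unfolding F_def by (simp add: ga_Suc)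
    moreover have "F (Suc i) = (real i + 1/2) * ga i * ga (m - i)" unfolding F_def by (simp add: ga_Suc)
    ultimately show "F (Suc i) + F i = (real m + 1) * (ga i * ga (m - i))"
      using i by (simp add: of_nat_diff algebra_simps)
  qed
  then have "(\<Sum>i\<le>m. real (m choose i) * (F (Suc i) + F i)) = (real m + 1) * (\<Sum>i\<le>m. real (m choose i) * ga i * ga (m - i))"
    by (simp add: sum_distrib_left ac_simps)
  then show ?case using e Suc.IH by simp
qed

lemma nn_integral_lborel2:
  fixes f :: "real \<times> real \<Rightarrow> ennreal"
  assumes "f \<in> borel_measurable borel"
  shows "(\<integral>\<^sup>+ p. f p \<partial>lborel) = (\<integral>\<^sup>+ u. \<integral>\<^sup>+ v. f (u,v) \<partial>lborel \<partial>lborel)"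
proof -
  have "f \<in> borel_measurable (lborel \<Otimes>\<^sub>M lborel)" unfolding lborel_prod using assms by simp
  then have "(\<integral>\<^sup>+ u. \<integral>\<^sup>+ v. f (u,v) \<partial>lborel \<partial>lborel) = integral\<^sup>N (lborel \<Otimes>\<^sub>M lborel) f"
    by (rule lborel.nn_integral_fst)
  then show ?thesis by (simp only: lborel_prod)
qed

lemma nn_integral_lborel2':
  fixes f :: "real \<times> real \<Rightarrow> ennreal"
  assumes "f \<in> borel_measurable borel"
  shows "(\<integral>\<^sup>+ p. f p \<partial>lborel) = (\<integral>\<^sup>+ v. \<integral>\<^sup>+ u. f (u,v) \<partial>lborel \<partial>lborel)"
proof -
  have "f \<in> borel_measurable (lborel \<Otimes>\<^sub>M lborel)" unfolding lborel_prod using assms by simp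
  then have "(\<integral>\<^sup>+ v. \<integral>\<^sup>+ u. f (u,v) \<partial>lborel \<partial>lborel) = integral\<^sup>N (lborel \<Otimes>\<^sub>M lborel) f"
    by (rule lborel_pair.nn_integral_snd)
  then show ?thesis by (simp only: lborel_prod)
qed

lemma radial_moment:
  "(\<integral>\<^sup>+ p. ennreal (exp (- (fst p ^ 2 + snd p ^ 2)) * (fst p ^ 2 + snd p ^ 2) ^ m / pi) \<partial>lborel) = ennreal (fact m)"
proof -
  define A where "A i u = ennreal (exp (- u\<^sup>2) * u ^ (2*i))" for i and u :: real
  have Am[measurable]: "A i \<in> borel_measurable borel" for i unfolding A_def by measurable
  have AI: "(\<integral>\<^sup>+ u. A i u \<partial>lborel) = ennreal (sqrt pi * ga i)" for i
    unfolding A_def ga_def by (rule gauss_moment)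
  have pt: "ennreal (exp (- (u ^ 2 + v ^ 2)) * (u ^ 2 + v ^ 2) ^ m / pi) =
     (\<Sum>i\<le>m. ennreal (real (m choose i) / pi) * A i u * A (m - i) v)" for u v :: real
  proof -
    have "exp (- (u ^ 2 + v ^ 2)) * (u ^ 2 + v ^ 2) ^ m / pi =
       (\<Sum>i\<le>m. (real (m choose i) / pi) * (exp (- u\<^sup>2) * u ^ (2*i)) * (exp (- v\<^sup>2) * v ^ (2*(m-i))))"
    proof -
      have e: "\<And>i. (x::real) ^ (2*i) = (x\<^sup>2) ^ i" for x by (simp add: power_mult)
      have x: "exp (- (u ^ 2 + v ^ 2)) = exp (- u\<^sup>2) * exp (- v\<^sup>2)" by (simp add: exp_add[symmetric])
      show ?thesis
      unfolding binomial_ring e x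
      by (simp add: sum_distrib_left sum_distrib_right sum_divide_distrib ac_simps)
    qed
    also have "ennreal \<dots> = (\<Sum>i\<le>m. ennreal ((real (m choose i) / pi) * (exp (- u\<^sup>2) * u ^ (2*i)) * (exp (- v\<^sup>2) * v ^ (2*(m-i)))))"
      by (rule sum_ennreal[symmetric]) (simp add: power_mult)
    finally have eq: "ennreal (exp (- (u ^ 2 + v ^ 2)) * (u ^ 2 + v ^ 2) ^ m / pi) = (\<Sum>i\<le>m. ennreal ((real (m choose i) / pi) * (exp (- u\<^sup>2) * u ^ (2*i)) * (exp (- v\<^sup>2) * v ^ (2*(m-i)))))" .
    have m3: "ennreal (x * y * z) = ennreal x * ennreal y * ennreal z" if "0 \<le> x" "0 \<le> y" "0 \<le> z" for x y z :: real
      using that by (simp add: ennreal_mult)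
    show ?thesis unfolding eq A_def
      by (intro sum.cong refl m3) (auto simp: power_mult)
  qed
  have "(\<integral>\<^sup>+ p. ennreal (exp (- (fst p ^ 2 + snd p ^ 2)) * (fst p ^ 2 + snd p ^ 2) ^ m / pi) \<partial>lborel)
      = (\<integral>\<^sup>+ u. \<integral>\<^sup>+ v. (\<Sum>i\<le>m. ennreal (real (m choose i) / pi) * A i u * A (m - i) v) \<partial>lborel \<partial>lborel)"
  proof (subst nn_integral_lborel2)
    show "(\<lambda>p. ennreal (exp (- (fst p ^ 2 + snd p ^ 2)) * (fst p ^ 2 + snd p ^ 2) ^ m / pi)) \<in> borel_measurable borel"
      by (intro measurable_compose[OF _ measurable_ennreal] borel_measurable_continuous_onI continuous_intros) auto
  qed (simp only: fst_conv snd_conv pt)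
  also have "\<dots> = (\<integral>\<^sup>+ u. (\<Sum>i\<le>m. ennreal (real (m choose i) / pi) * A i u * ennreal (sqrt pi * ga (m - i))) \<partial>lborel)"
    by (intro nn_integral_cong) (simp add: nn_integral_sum nn_integral_cmult AI)
  also have "\<dots> = (\<Sum>i\<le>m. ennreal (real (m choose i) / pi) * ennreal (sqrt pi * ga i) * ennreal (sqrt pi * ga (m - i)))"
    by (simp add: nn_integral_sum nn_integral_cmult nn_integral_multc AI)
  also have "\<dots> = (\<Sum>i\<le>m. ennreal (real (m choose i) * ga i * ga (m - i)))"
  proof (intro sum.cong refl)
    fix i
    have "0 \<le> ga i" "0 \<le> ga (m - i)" unfolding ga_def by auto
    then show "ennreal (real (m choose i) / pi) * ennreal (sqrt pi * ga i) * ennreal (sqrt pi * ga (m - i)) =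
      ennreal (real (m choose i) * ga i * ga (m - i))"
      by (simp add: ennreal_mult[symmetric] field_simps)
  qed
  also have "\<dots> = ennreal (fact m)"
  proof -
    have "\<And>i. 0 \<le> real (m choose i) * ga i * ga (m - i)" unfolding ga_def by auto
    then show ?thesis by (subst sum_ennreal) (auto simp: ga_conv)
  qed
  finally show ?thesis .
qed


lemma cont_meas: "continuous_on UNIV (f :: 'a::topological_space \<Rightarrow> 'b::topological_space) \<Longrightarrow> f \<in> borel \<rightarrow>\<^sub>M borel"
  by (rule borel_measurable_continuous_onI)

lemma shear1:
  fixes F :: "real \<times> real \<Rightarrow> ennreal"
  assumes Fm: "F \<in> borel_measurable borel"
  shows "(\<integral>\<^sup>+ p. F (fst p + a * snd p, snd p) \<partial>lborel) = (\<integral>\<^sup>+ p. F p \<partial>lborel)"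
proof -
  have m1: "(\<lambda>p. F (fst p + a * snd p, snd p)) \<in> borel_measurable borel"
    by (rule measurable_compose[OF cont_meas Fm]) (intro continuous_intros)
  have inner: "(\<integral>\<^sup>+ u. F (u + a * v, v) \<partial>lborel) = (\<integral>\<^sup>+ u. F (u, v) \<partial>lborel)" for v
  proof -
    have mv: "(\<lambda>u. F (u, v)) \<in> borel_measurable borel"
      by (rule measurable_compose[OF cont_meas Fm]) (intro continuous_intros)
    have "(\<integral>\<^sup>+ u. F (u, v) \<partial>lborel) = (\<integral>\<^sup>+ u. F (a * v + 1 * u, v) \<partial>lborel)"
      using nn_integral_real_affine[OF mv, of 1 "a * v"] by simp
    then show ?thesis by (simp add: ac_simps)
  qed
  show ?thesis
    by (simp add: nn_integral_lborel2'[OF m1] nn_integral_lborel2'[OF Fm] inner)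
qed

lemma shear2:
  fixes F :: "real \<times> real \<Rightarrow> ennreal"
  assumes Fm: "F \<in> borel_measurable borel"
  shows "(\<integral>\<^sup>+ p. F (fst p, snd p + b * fst p) \<partial>lborel) = (\<integral>\<^sup>+ p. F p \<partial>lborel)"
proof -
  have m1: "(\<lambda>p. F (fst p, snd p + b * fst p)) \<in> borel_measurable borel"
    by (rule measurable_compose[OF cont_meas Fm]) (intro continuous_intros)
  have inner: "(\<integral>\<^sup>+ v. F (u, v + b * u) \<partial>lborel) = (\<integral>\<^sup>+ v. F (u, v) \<partial>lborel)" for u
  proof -
    have mv: "(\<lambda>v. F (u, v)) \<in> borel_measurable borel"
      by (rule measurable_compose[OF cont_meas Fm]) (intro continuous_intros)
    have "(\<integral>\<^sup>+ v. F (u, v) \<partial>lborel) = (\<integral>\<^sup>+ v. F (u, b * u + 1 * v) \<partial>lborel)"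
      using nn_integral_real_affine[OF mv, of 1 "b * u"] by simp
    then show ?thesis by (simp add: ac_simps)
  qed
  show ?thesis
    by (simp add: nn_integral_lborel2[OF m1] nn_integral_lborel2[OF Fm] inner)
qed

lemma Complex_pair_cont: "continuous_on UNIV (\<lambda>p::real\<times>real. Complex (fst p) (snd p))"
proof -
  have "(\<lambda>p::real\<times>real. Complex (fst p) (snd p)) = (\<lambda>p. complex_of_real (fst p) + \<i> * complex_of_real (snd p))"
    by (auto simp: complex_eq_iff)
  then show ?thesis by (simp add: continuous_intros)
qed

lemma rot_inv:
  fixes F :: "complex \<Rightarrow> ennreal"
  assumes Fm: "F \<in> borel_measurable borel" and c: "cos t \<noteq> -1"
  shows "(\<integral>\<^sup>+ p. F (cis t * Complex (fst p) (snd p)) \<partial>lborel) = (\<integral>\<^sup>+ p. F (Complex (fst p) (snd p)) \<partial>lborel)"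
proof -
  define G where "G p = F (Complex (fst p) (snd p))" for p :: "real \<times> real"
  have Gm: "G \<in> borel_measurable borel" unfolding G_def
    by (rule measurable_compose[OF cont_meas[OF Complex_pair_cont] Fm])
  define a where "a = - sin t / (1 + cos t)"
  define b where "b = sin t"
  define S1 where "S1 p = (fst p + a * snd p, snd p)" for p :: "real \<times> real"
  define S2 where "S2 p = (fst p, snd p + b * fst p)" for p :: "real \<times> real"
  have S1c: "continuous_on UNIV S1" unfolding S1_def by (intro continuous_intros)
  have S2c: "continuous_on UNIV S2" unfolding S2_def by (intro continuous_intros)
  have m1: "(\<lambda>p. G (S1 p)) \<in> borel_measurable borel"
    by (rule measurable_compose[OF cont_meas[OF S1c] Gm])
  have m2: "(\<lambda>p. G (S1 (S2 p))) \<in> borel_measurable borel"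
    by (rule measurable_compose[OF cont_meas[OF S2c] m1])
  have c1: "1 + cos t \<noteq> 0" using c by (metis add_eq_0_iff)
  have sc: "sin t ^ 2 + cos t ^ 2 = 1" by simp
  have pt: "G (S1 (S2 (S1 p))) = F (cis t * Complex (fst p) (snd p))" for p
  proof -
    obtain u v where p: "p = (u, v)" by (cases p)
    have e1: "1 + a * b = cos t"
      unfolding a_def b_def using c1 sc by (simp add: field_simps power2_eq_square)
    have e3: "a * (1 + cos t) = - sin t" unfolding a_def using c1 by simp
    have e2: "a * (2 + a * b) = - sin t"
      using e1 e3 by (metis add.assoc one_add_one)
    have "Complex (u + a * v + a * (v + b * (u + a * v))) (v + b * (u + a * v)) = cis t * Complex u v"
    proof -
      have "u + a * v + a * (v + b * (u + a * v)) = u * (1 + a * b) + v * (a * (2 + a * b))"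
        by (simp add: algebra_simps)
      also have "\<dots> = cos t * u - sin t * v" unfolding e1 e2 by simp
      finally have hx: "u + a * v + a * (v + b * (u + a * v)) = cos t * u - sin t * v" .
      have "v + b * (u + a * v) = u * b + v * (1 + a * b)"
        by (simp add: algebra_simps)
      also have "\<dots> = sin t * u + cos t * v" unfolding e1 by (simp add: b_def)
      finally have hy: "v + b * (u + a * v) = sin t * u + cos t * v" .
      show ?thesis
        apply (rule complex_eqI)
        apply (simp only: complex.sel)
        apply (subst hx, simp)
        apply (simp only: complex.sel)
        apply (subst hy, simp)
        done
    qed
    then show ?thesis unfolding G_def S1_def S2_def p by simp
  qed
  have "(\<integral>\<^sup>+ p. F (cis t * Complex (fst p) (snd p)) \<partial>lborel) = (\<integral>\<^sup>+ p. G (S1 (S2 (S1 p))) \<partial>lborel)"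
    by (simp add: pt)
  also have "\<dots> = (\<integral>\<^sup>+ p. G (S1 (S2 p)) \<partial>lborel)"
    using shear1[OF m2, of a] unfolding S1_def by simp
  also have "\<dots> = (\<integral>\<^sup>+ p. G (S1 p) \<partial>lborel)"
    using shear2[OF m1, of b] unfolding S2_def by simp
  also have "\<dots> = (\<integral>\<^sup>+ p. G p \<partial>lborel)"
    using shear1[OF Gm, of a] unfolding S1_def by simp
  finally show ?thesis unfolding G_def .
qed


lemma cont_meas': "continuous_on UNIV (f :: real \<Rightarrow> real) \<Longrightarrow> f \<in> borel_measurable lborel"
  using borel_measurable_continuous_onI by simp

lemma int_cos_mult:
  fixes j :: int
  shows "integral\<^sup>L lborel (\<lambda>t. indicator {0..2*pi} t * cos (of_int j * t)) = (if j = 0 then 2*pi else 0)"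
proof (cases "j = 0")
  case True
  have "integral\<^sup>L lborel (\<lambda>t. indicator {0..2*pi} t *\<^sub>R (1::real)) = (\<lambda>t. t) (2*pi) - (\<lambda>t. t) 0"
    by (rule integral_FTC_atLeastAtMost) (auto intro!: derivative_eq_intros continuous_intros simp flip: has_real_derivative_iff_has_vector_derivative)
  then show ?thesis using True by simp
next
  case False
  have "integral\<^sup>L lborel (\<lambda>t. indicator {0..2*pi} t *\<^sub>R cos (of_int j * t)) =
      (\<lambda>t. sin (of_int j * t) / of_int j) (2*pi) - (\<lambda>t. sin (of_int j * t) / of_int j) 0"
    using False by (intro integral_FTC_atLeastAtMost) (auto intro!: derivative_eq_intros continuous_intros simp flip: has_real_derivative_iff_has_vector_derivative)
  also have "\<dots> = 0"
    using sin_int_2pin[of j] by (simp add: ac_simps)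
  finally show ?thesis using False by simp
qed

lemma int_sin_mult:
  fixes j :: int
  shows "integral\<^sup>L lborel (\<lambda>t. indicator {0..2*pi} t * sin (of_int j * t)) = 0"
proof (cases "j = 0")
  case True
  then show ?thesis by simp
next
  case False
  have "integral\<^sup>L lborel (\<lambda>t. indicator {0..2*pi} t *\<^sub>R sin (of_int j * t)) =
      (\<lambda>t. - cos (of_int j * t) / of_int j) (2*pi) - (\<lambda>t. - cos (of_int j * t) / of_int j) 0"
    using False by (intro integral_FTC_atLeastAtMost) (auto intro!: derivative_eq_intros continuous_intros simp flip: has_real_derivative_iff_has_vector_derivative)
  also have "\<dots> = 0"
    using cos_int_2pin[of j] by (simp add: ac_simps)
  finally show ?thesis by simp
qed

lemma integrable_ind_cont:
  fixes f :: "real \<Rightarrow> real"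
  assumes "continuous_on UNIV f"
  shows "integrable lborel (\<lambda>t. indicator {0..2*pi} t * f t)"
proof -
  have "integrable lborel (\<lambda>t. indicator {0..2*pi} t *\<^sub>R f t)"
    using borel_integrable_atLeastAtMost'[OF continuous_on_subset[OF assms subset_UNIV]] unfolding set_integrable_def .
  then show ?thesis by simp
qed

lemma cmod_sq_sum:
  fixes d :: "nat \<Rightarrow> complex"
  shows "(cmod (\<Sum>m<N. d m * cis (real m * t)))\<^sup>2 =
     (\<Sum>m<N. \<Sum>k<N. Re (d m * cnj (d k)) * cos (of_int (int m - int k) * t) - Im (d m * cnj (d k)) * sin (of_int (int m - int k) * t))"
proof -
  have "(cmod (\<Sum>m<N. d m * cis (real m * t)))\<^sup>2 = Re ((\<Sum>m<N. d m * cis (real m * t)) * cnj (\<Sum>k<N. d k * cis (real k * t)))"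
    by (metis complex_norm_square Re_complex_of_real)
  also have "\<dots> = (\<Sum>m<N. \<Sum>k<N. Re (d m * cnj (d k) * cis (of_int (int m - int k) * t)))"
  proof -
    have "(\<Sum>m<N. d m * cis (real m * t)) * cnj (\<Sum>k<N. d k * cis (real k * t)) =
       (\<Sum>m<N. \<Sum>k<N. d m * cnj (d k) * (cis (real m * t) * cis (- (real k * t))))"
      by (simp add: sum_distrib_left sum_distrib_right cis_cnj ac_simps) (rule sum.swap)
    also have "\<dots> = (\<Sum>m<N. \<Sum>k<N. d m * cnj (d k) * cis (of_int (int m - int k) * t))"
      by (simp add: cis_mult algebra_simps)
    finally show ?thesis by (simp add: Re_sum)
  qed
  also have "\<dots> = (\<Sum>m<N. \<Sum>k<N. Re (d m * cnj (d k)) * cos (of_int (int m - int k) * t) - Im (d m * cnj (d k)) * sin (of_int (int m - int k) * t))"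
    by (intro sum.cong refl) (simp add: cis.sel)
  finally show ?thesis .
qed

lemma parseval_fin:
  fixes d :: "nat \<Rightarrow> complex"
  shows "integral\<^sup>L lborel (\<lambda>t. indicator {0..2*pi} t * (cmod (\<Sum>m<N. d m * cis (real m * t)))\<^sup>2) =
     2 * pi * (\<Sum>m<N. (cmod (d m))\<^sup>2)"
proof -
  define A where "A m k = Re (d m * cnj (d k))" for m k
  define B where "B m k = Im (d m * cnj (d k))" for m k
  define j where "j m k = int m - int k" for m k
  have "integral\<^sup>L lborel (\<lambda>t. indicator {0..2*pi} t * (cmod (\<Sum>m<N. d m * cis (real m * t)))\<^sup>2) =
     integral\<^sup>L lborel (\<lambda>t. \<Sum>m<N. \<Sum>k<N. A m k * (indicator {0..2*pi} t * cos (of_int (j m k) * t)) - B m k * (indicator {0..2*pi} t * sin (of_int (j m k) * t)))"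
    unfolding cmod_sq_sum A_def B_def j_def
    by (intro Bochner_Integration.integral_cong refl) (simp add: sum_distrib_left algebra_simps sum_subtractf)
  also have "\<dots> = (\<Sum>m<N. \<Sum>k<N. A m k * integral\<^sup>L lborel (\<lambda>t. indicator {0..2*pi} t * cos (of_int (j m k) * t))
       - B m k * integral\<^sup>L lborel (\<lambda>t. indicator {0..2*pi} t * sin (of_int (j m k) * t)))"
  proof -
    have ic: "integrable lborel (\<lambda>t. indicator {0..2*pi} t * cos (of_int (j m k) * t))" for m k
      by (intro integrable_ind_cont continuous_intros)
    have isn: "integrable lborel (\<lambda>t. indicator {0..2*pi} t * sin (of_int (j m k) * t))" for m k
      by (intro integrable_ind_cont continuous_intros)
    show ?thesis
      by (simp add: Bochner_Integration.integral_sum Bochner_Integration.integral_diff ic isn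
            integrable_sum integrable_diff)
  qed
  also have "\<dots> = (\<Sum>m<N. \<Sum>k<N. if m = k then 2 * pi * A m m else 0)"
    unfolding int_cos_mult int_sin_mult j_def by (intro sum.cong refl) auto
  also have "\<dots> = 2 * pi * (\<Sum>m<N. (cmod (d m))\<^sup>2)"
    by (simp add: A_def sum_distrib_left complex_mult_cnj cmod_def)
  finally show ?thesis .
qed

lemma parseval:
  fixes d :: "nat \<Rightarrow> complex"
  assumes sd: "summable (\<lambda>m. norm (d m))"
  shows "(\<integral>\<^sup>+ t. ennreal (indicator {0..2*pi} t * (cmod (\<Sum>m. d m * cis (real m * t)))\<^sup>2) \<partial>lborel)
       = ennreal (2 * pi * (\<Sum>m. (cmod (d m))\<^sup>2))"
    and "summable (\<lambda>m. (cmod (d m))\<^sup>2)"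
proof -
  define S where "S t = (\<Sum>m. d m * cis (real m * t))" for t
  define s where "s N t = (\<Sum>m<N. d m * cis (real m * t))" for N t
  define g where "g t = indicator {0..2*pi} t * (cmod (S t))\<^sup>2" for t
  define gN where "gN N t = indicator {0..2*pi} t * (cmod (s N t))\<^sup>2" for N t
  define B where "B = (\<Sum>m. norm (d m))"
  have st: "summable (\<lambda>m. norm (d m * cis (real m * t)))" for t
    using sd by (simp add: norm_mult)
  have lim_s: "(\<lambda>N. s N t) \<longlonglongrightarrow> S t" for t
    unfolding s_def S_def by (rule summable_LIMSEQ[OF summable_norm_cancel[OF st]])
  have lim_g: "(\<lambda>N. gN N t) \<longlonglongrightarrow> g t" for t
    unfolding gN_def g_def by (intro tendsto_intros lim_s)
  have sN_bound: "cmod (s N t) \<le> B" for N t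
  proof -
    have "cmod (s N t) \<le> (\<Sum>m<N. norm (d m * cis (real m * t)))"
      unfolding s_def by (rule norm_sum)
    also have "\<dots> = (\<Sum>m<N. norm (d m))" by (simp add: norm_mult)
    also have "\<dots> \<le> B" unfolding B_def by (rule sum_le_suminf[OF sd]) auto
    finally show ?thesis .
  qed
  have gN_cont: "continuous_on UNIV (\<lambda>t. (cmod (s N t))\<^sup>2)" for N
    unfolding s_def by (intro continuous_intros)
  have gNm: "gN N \<in> borel_measurable lborel" for N
    unfolding gN_def by (intro borel_measurable_times borel_measurable_indicator cont_meas' gN_cont) simp
  have gm: "g \<in> borel_measurable lborel"
    by (rule borel_measurable_LIMSEQ_real[OF lim_g gNm])
  have wint: "integrable lborel (\<lambda>t. indicator {0..2*pi} t * B\<^sup>2)"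
    by (intro integrable_ind_cont continuous_intros)
  have bound: "AE t in lborel. norm (gN N t) \<le> indicator {0..2*pi} t * B\<^sup>2" for N
  proof (rule AE_I2)
    fix t
    have "(cmod (s N t))\<^sup>2 \<le> B\<^sup>2"
      using sN_bound[of N t] by (intro power_mono) auto
    then show "norm (gN N t) \<le> indicator {0..2*pi} t * B\<^sup>2"
      unfolding gN_def by (auto split: split_indicator)
  qed
  have gint: "integrable lborel g"
    by (rule integrable_dominated_convergence[where s=gN, OF gm gNm wint _ bound]) (simp add: lim_g)
  have lim_int: "(\<lambda>N. integral\<^sup>L lborel (gN N)) \<longlonglongrightarrow> integral\<^sup>L lborel g"
    by (rule integral_dominated_convergence[where s=gN, OF gm gNm wint _ bound]) (simp add: lim_g)
  have "(\<lambda>N. 2 * pi * (\<Sum>m<N. (cmod (d m))\<^sup>2)) \<longlonglongrightarrow> integral\<^sup>L lborel g"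
    using lim_int unfolding gN_def s_def parseval_fin .
  then have lim2: "(\<lambda>N. (\<Sum>m<N. (cmod (d m))\<^sup>2)) \<longlonglongrightarrow> integral\<^sup>L lborel g / (2 * pi)"
  proof -
    have "(\<lambda>N. 2 * pi * (\<Sum>m<N. (cmod (d m))\<^sup>2) / (2 * pi)) \<longlonglongrightarrow> integral\<^sup>L lborel g / (2 * pi)"
      by (intro tendsto_divide tendsto_const \<open>(\<lambda>N. 2 * pi * (\<Sum>m<N. (cmod (d m))\<^sup>2)) \<longlonglongrightarrow> integral\<^sup>L lborel g\<close>) simp
    then show ?thesis by simp
  qed
  then have sq: "summable (\<lambda>m. (cmod (d m))\<^sup>2)"
    using summable_iff_convergent convergent_def by blast
  then show "summable (\<lambda>m. (cmod (d m))\<^sup>2)" .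
  have "(\<Sum>m. (cmod (d m))\<^sup>2) = integral\<^sup>L lborel g / (2 * pi)"
    using lim2 summable_LIMSEQ[OF sq] LIMSEQ_unique by blast
  then have ig: "integral\<^sup>L lborel g = 2 * pi * (\<Sum>m. (cmod (d m))\<^sup>2)" by simp
  have "(\<integral>\<^sup>+ t. ennreal (g t) \<partial>lborel) = ennreal (integral\<^sup>L lborel g)"
    by (rule nn_integral_eq_integral[OF gint]) (simp add: g_def)
  then show "(\<integral>\<^sup>+ t. ennreal (indicator {0..2*pi} t * (cmod (\<Sum>m. d m * cis (real m * t)))\<^sup>2) \<partial>lborel)
       = ennreal (2 * pi * (\<Sum>m. (cmod (d m))\<^sup>2))"
    unfolding g_def S_def ig .
qed


lemma cos_m1_interval: "0 \<le> t \<Longrightarrow> t \<le> 2*pi \<Longrightarrow> t \<noteq> pi \<Longrightarrow> cos t \<noteq> -1"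
proof
  assume t: "0 \<le> t" "t \<le> 2*pi" "t \<noteq> pi" and c: "cos t = -1"
  then obtain n :: int where n: "t = (2 * real_of_int n + 1) * pi" using cos_eq_minus1 by auto
  have "0 \<le> (2 * real_of_int n + 1) * pi" using t n by simp
  then have a: "0 \<le> 2 * real_of_int n + 1" using pi_gt_zero by (simp add: zero_le_mult_iff)
  have "(2 * real_of_int n + 1) * pi \<le> 2 * pi" using t n by simp
  then have b: "2 * real_of_int n + 1 \<le> 2" using pi_gt_zero by simp
  from a b have "n = 0" by linarith
  then show False using n t by simp
qed

lemma ind_integral: "(\<integral>\<^sup>+ t. ennreal (indicator {0..2*pi} t / (2*pi)) \<partial>lborel) = 1"
proof -
  have "(\<integral>\<^sup>+ t. ennreal (indicator {0..2*pi} t / (2*pi)) \<partial>lborel) = (\<integral>\<^sup>+ t. ennreal (1/(2*pi)) * indicator {0..2*pi} t \<partial>lborel)"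
    by (intro nn_integral_cong) (simp split: split_indicator)
  also have "\<dots> = ennreal (1/(2*pi)) * ennreal (2*pi)"
    by (subst nn_integral_cmult_indicator) auto
  also have "\<dots> = 1" by (simp flip: ennreal_mult)
  finally show ?thesis .
qed

lemma complex_fock:
  fixes c :: "nat \<Rightarrow> complex"
  assumes S: "\<And>z. summable (\<lambda>m. c m * z^m)"
  shows "(\<integral>\<^sup>+ p. ennreal (exp (- (fst p ^ 2 + snd p ^ 2)) * (cmod (\<Sum>m. c m * (Complex (fst p) (snd p))^m))\<^sup>2 / pi) \<partial>lborel)
     = (\<Sum>m. ennreal ((cmod (c m))\<^sup>2 * fact m))"
proof -
  define h where "h z = (\<Sum>m. c m * z^m)" for z
  define W where "W z = ennreal (exp (- (cmod z)\<^sup>2) * (cmod (h z))\<^sup>2 / pi)" for z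
  define Cp where "Cp p = Complex (fst p) (snd p)" for p :: "real \<times> real"
  have hc: "continuous_on UNIV h"
    unfolding h_def by (intro continuous_at_imp_continuous_on ballI isCont_powser_converges_everywhere S)
  have Wc: "continuous_on UNIV (\<lambda>z. exp (- (cmod z)\<^sup>2) * (cmod (h z))\<^sup>2 / pi)"
    by (intro continuous_intros continuous_on_compose2[OF hc]) auto
  have Wm: "W \<in> borel_measurable borel"
    unfolding W_def by (rule measurable_compose[OF cont_meas[OF Wc] measurable_ennreal])
  have Cpc: "continuous_on UNIV Cp" unfolding Cp_def by (rule Complex_pair_cont)
  have cm2: "(cmod (Cp p))\<^sup>2 = fst p ^ 2 + snd p ^ 2" for p
    unfolding Cp_def by (simp add: cmod_def)
  define Phi where "Phi = (\<integral>\<^sup>+ p. W (Cp p) \<partial>lborel)"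
  have lhs: "(\<integral>\<^sup>+ p. ennreal (exp (- (fst p ^ 2 + snd p ^ 2)) * (cmod (\<Sum>m. c m * (Complex (fst p) (snd p))^m))\<^sup>2 / pi) \<partial>lborel) = Phi"
    unfolding Phi_def W_def h_def Cp_def by (intro nn_integral_cong) (simp add: cmod_def)
  have rot: "(\<integral>\<^sup>+ p. W (cis t * Cp p) \<partial>lborel) = Phi" if "cos t \<noteq> -1" for t
    unfolding Phi_def Cp_def by (rule rot_inv[OF Wm that])
  \<comment> \<open>averaging over the angle\<close>
  have "Phi = (\<integral>\<^sup>+ t. ennreal (indicator {0..2*pi} t / (2*pi)) * Phi \<partial>lborel)"
    by (simp add: nn_integral_multc ind_integral)
  also have "\<dots> = (\<integral>\<^sup>+ t. ennreal (indicator {0..2*pi} t / (2*pi)) * (\<integral>\<^sup>+ p. W (cis t * Cp p) \<partial>lborel) \<partial>lborel)"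
  proof (rule nn_integral_cong_AE)
    show "AE t in lborel. ennreal (indicator {0..2*pi} t / (2*pi)) * Phi = ennreal (indicator {0..2*pi} t / (2*pi)) * (\<integral>\<^sup>+ p. W (cis t * Cp p) \<partial>lborel)"
      using AE_lborel_singleton[of pi]
    proof eventually_elim
      case (elim t)
      show ?case
      proof (cases "t \<in> {0..2*pi}")
        case True
        then show ?thesis using rot[OF cos_m1_interval] elim by auto
      qed simp
    qed
  qed
  also have "\<dots> = (\<integral>\<^sup>+ t. \<integral>\<^sup>+ p. ennreal (indicator {0..2*pi} t / (2*pi)) * W (cis t * Cp p) \<partial>lborel \<partial>lborel)"
  proof (intro nn_integral_cong)
    fix t :: real
    have m: "(\<lambda>p. W (cis t * Cp p)) \<in> borel_measurable lborel"
      using measurable_compose[OF cont_meas[OF continuous_on_mult_left[OF Cpc]] Wm] by simp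
    show "ennreal (indicator {0..2*pi} t / (2*pi)) * (\<integral>\<^sup>+ p. W (cis t * Cp p) \<partial>lborel) = (\<integral>\<^sup>+ p. ennreal (indicator {0..2*pi} t / (2*pi)) * W (cis t * Cp p) \<partial>lborel)"
      by (rule nn_integral_cmult[symmetric, OF m])
  qed
  also have "\<dots> = (\<integral>\<^sup>+ p. \<integral>\<^sup>+ t. ennreal (indicator {0..2*pi} t / (2*pi)) * W (cis t * Cp p) \<partial>lborel \<partial>lborel)"
  proof (rule lborel_pair.Fubini')
    have c2: "continuous_on UNIV (\<lambda>x::(real \<times> real) \<times> real. cis (snd x) * Cp (fst x))"
      by (intro continuous_intros continuous_on_compose2[OF Cpc]) auto
    have "(\<lambda>x::(real \<times> real) \<times> real. ennreal (indicator {0..2*pi} (snd x) / (2*pi)) * W (cis (snd x) * Cp (fst x))) \<in> borel_measurable borel"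
    proof (intro borel_measurable_times_ennreal measurable_compose[OF cont_meas[OF c2] Wm])
      have i1: "(\<lambda>t::real. indicator {0..2*pi} t / (2*pi)) \<in> borel_measurable borel"
        by (intro borel_measurable_divide borel_measurable_indicator borel_measurable_const) auto
      have "(\<lambda>x::(real \<times> real) \<times> real. indicator {0..2*pi} (snd x) / (2*pi)) \<in> borel_measurable borel"
        using measurable_compose[OF cont_meas[OF continuous_on_snd[OF continuous_on_id]] i1] by simp
      then show "(\<lambda>x::(real \<times> real) \<times> real. ennreal (indicator {0..2*pi} (snd x) / (2*pi))) \<in> borel_measurable borel"
        by (rule measurable_compose[OF _ measurable_ennreal])
    qed
    then show "(\<lambda>(p, t). ennreal (indicator {0..2*pi} t / (2*pi)) * W (cis t * Cp p)) \<in> borel_measurable (lborel \<Otimes>\<^sub>M lborel)"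
      unfolding lborel_prod by (simp add: case_prod_beta')
  qed
  also have "\<dots> = (\<integral>\<^sup>+ p. (\<Sum>m. ennreal ((cmod (c m))\<^sup>2 * (exp (- (fst p ^ 2 + snd p ^ 2)) * (fst p ^ 2 + snd p ^ 2) ^ m / pi))) \<partial>lborel)"
  proof (intro nn_integral_cong)
    fix p :: "real \<times> real"
    define z where "z = Cp p"
    define d where "d m = c m * z ^ m" for m
    have sd: "summable (\<lambda>m. norm (d m))"
    proof -
      have "norm z < norm (of_real (norm z + 1) :: complex)" by simp
      then show ?thesis unfolding d_def by (rule powser_insidea[OF S])
    qed
    have hz: "h (cis t * z) = (\<Sum>m. d m * cis (real m * t))" for t
      unfolding h_def d_def by (simp add: power_mult_distrib Complex.DeMoivre ac_simps)
    have P: "(\<integral>\<^sup>+ t. ennreal (indicator {0..2*pi} t * (cmod (h (cis t * z)))\<^sup>2) \<partial>lborel) = ennreal (2 * pi * (\<Sum>m. (cmod (d m))\<^sup>2))"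
      unfolding hz by (rule parseval(1)[OF sd])
    have sq: "summable (\<lambda>m. (cmod (d m))\<^sup>2)" by (rule parseval(2)[OF sd])
    have mt: "(\<lambda>t. ennreal (indicator {0..2*pi} t * (cmod (h (cis t * z)))\<^sup>2)) \<in> borel_measurable lborel"
    proof -
      have "continuous_on UNIV (\<lambda>t. (cmod (h (cis t * z)))\<^sup>2)"
        by (intro continuous_intros continuous_on_compose2[OF hc]) auto
      then show ?thesis
        by (intro measurable_compose[OF _ measurable_ennreal] borel_measurable_times borel_measurable_indicator' cont_meas') auto
    qed
    have E: "exp (- (cmod z)\<^sup>2) / pi = exp (- (fst p ^ 2 + snd p ^ 2)) / pi" unfolding z_def cm2 ..
    have "(\<integral>\<^sup>+ t. ennreal (indicator {0..2*pi} t / (2*pi)) * W (cis t * z) \<partial>lborel) =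
        (\<integral>\<^sup>+ t. ennreal (exp (- (cmod z)\<^sup>2) / pi / (2*pi)) * ennreal (indicator {0..2*pi} t * (cmod (h (cis t * z)))\<^sup>2) \<partial>lborel)"
      unfolding W_def
      by (intro nn_integral_cong) (simp add: norm_mult ennreal_mult'[symmetric] split: split_indicator)
    also have "\<dots> = ennreal (exp (- (cmod z)\<^sup>2) / pi / (2*pi)) * ennreal (2 * pi * (\<Sum>m. (cmod (d m))\<^sup>2))"
      by (subst nn_integral_cmult[OF mt]) (simp only: P)
    also have "\<dots> = ennreal (exp (- (cmod z)\<^sup>2) / pi * (\<Sum>m. (cmod (d m))\<^sup>2))"
      by (simp add: ennreal_mult[symmetric] suminf_nonneg[OF sq])
    also have "\<dots> = ennreal (\<Sum>m. (cmod (c m))\<^sup>2 * (exp (- (fst p ^ 2 + snd p ^ 2)) * (fst p ^ 2 + snd p ^ 2) ^ m / pi))"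
    proof -
      have "(cmod (d m))\<^sup>2 = (cmod (c m))\<^sup>2 * (fst p ^ 2 + snd p ^ 2) ^ m" for m
        unfolding d_def z_def by (simp add: norm_mult norm_power power_mult_distrib cm2[symmetric] power_mult[symmetric] mult.commute)
      have "exp (- (cmod z)\<^sup>2) / pi * (\<Sum>m. (cmod (d m))\<^sup>2) = (\<Sum>m. exp (- (cmod z)\<^sup>2) / pi * (cmod (d m))\<^sup>2)"
        by (rule suminf_mult[OF sq, symmetric])
      also have "\<dots> = (\<Sum>m. (cmod (c m))\<^sup>2 * (exp (- (fst p ^ 2 + snd p ^ 2)) * (fst p ^ 2 + snd p ^ 2) ^ m / pi))"
        using \<open>\<And>m. (cmod (d m))\<^sup>2 = _\<close> E by (simp add: ac_simps)
      finally show ?thesis by simp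
    qed
    also have "\<dots> = (\<Sum>m. ennreal ((cmod (c m))\<^sup>2 * (exp (- (fst p ^ 2 + snd p ^ 2)) * (fst p ^ 2 + snd p ^ 2) ^ m / pi)))"
    proof -
      have s2: "summable (\<lambda>m. (cmod (c m))\<^sup>2 * (exp (- (fst p ^ 2 + snd p ^ 2)) * (fst p ^ 2 + snd p ^ 2) ^ m / pi))"
      proof -
        have "(cmod (d m))\<^sup>2 = (cmod (c m))\<^sup>2 * (fst p ^ 2 + snd p ^ 2) ^ m" for m
          unfolding d_def z_def by (simp add: norm_mult norm_power power_mult_distrib cm2[symmetric] power_mult[symmetric] mult.commute)
        then have "summable (\<lambda>m. (cmod (c m))\<^sup>2 * (fst p ^ 2 + snd p ^ 2) ^ m)"
          using sq by simp
        then have "summable (\<lambda>m. ((cmod (c m))\<^sup>2 * (fst p ^ 2 + snd p ^ 2) ^ m) * (exp (- (fst p ^ 2 + snd p ^ 2)) / pi))"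
          by (rule summable_mult2)
        moreover have "(\<lambda>m. ((cmod (c m))\<^sup>2 * (fst p ^ 2 + snd p ^ 2) ^ m) * (exp (- (fst p ^ 2 + snd p ^ 2)) / pi)) =
           (\<lambda>m. (cmod (c m))\<^sup>2 * (exp (- (fst p ^ 2 + snd p ^ 2)) * (fst p ^ 2 + snd p ^ 2) ^ m / pi))"
          by (simp add: fun_eq_iff)
        ultimately show ?thesis by (simp only:)
      qed
      show ?thesis
        by (rule sym, rule suminf_ennreal_eq) (simp, rule summable_sums[OF s2])
    qed
    finally show "(\<integral>\<^sup>+ t. ennreal (indicator {0..2*pi} t / (2*pi)) * W (cis t * Cp p) \<partial>lborel) =
       (\<Sum>m. ennreal ((cmod (c m))\<^sup>2 * (exp (- (fst p ^ 2 + snd p ^ 2)) * (fst p ^ 2 + snd p ^ 2) ^ m / pi)))"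
      unfolding z_def .
  qed
  also have "\<dots> = (\<Sum>m. \<integral>\<^sup>+ p. ennreal ((cmod (c m))\<^sup>2) * ennreal (exp (- (fst p ^ 2 + snd p ^ 2)) * (fst p ^ 2 + snd p ^ 2) ^ m / pi) \<partial>lborel)"
  proof -
    have mX: "(\<lambda>p. ennreal ((cmod (c m))\<^sup>2 * (exp (- (fst p ^ 2 + snd p ^ 2)) * (fst p ^ 2 + snd p ^ 2) ^ m / pi))) \<in> borel_measurable lborel" for m
    proof -
      have "continuous_on UNIV (\<lambda>p::real\<times>real. (cmod (c m))\<^sup>2 * (exp (- (fst p ^ 2 + snd p ^ 2)) * (fst p ^ 2 + snd p ^ 2) ^ m / pi))"
        by (intro continuous_intros) auto
      from measurable_compose[OF cont_meas[OF this] measurable_ennreal] show ?thesis by simp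
    qed
    have "(\<integral>\<^sup>+ p. (\<Sum>m. ennreal ((cmod (c m))\<^sup>2 * (exp (- (fst p ^ 2 + snd p ^ 2)) * (fst p ^ 2 + snd p ^ 2) ^ m / pi))) \<partial>lborel)
       = (\<Sum>m. \<integral>\<^sup>+ p. ennreal ((cmod (c m))\<^sup>2 * (exp (- (fst p ^ 2 + snd p ^ 2)) * (fst p ^ 2 + snd p ^ 2) ^ m / pi)) \<partial>lborel)"
      by (rule nn_integral_suminf[OF mX])
    also have "\<dots> = (\<Sum>m. \<integral>\<^sup>+ p. ennreal ((cmod (c m))\<^sup>2) * ennreal (exp (- (fst p ^ 2 + snd p ^ 2)) * (fst p ^ 2 + snd p ^ 2) ^ m / pi) \<partial>lborel)"
      by (intro suminf_cong nn_integral_cong) (subst ennreal_mult'[symmetric], simp_all)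
    finally show ?thesis .
  qed
  also have "\<dots> = (\<Sum>m. ennreal ((cmod (c m))\<^sup>2 * fact m))"
  proof (intro suminf_cong)
    fix m
    have mm: "(\<lambda>p. ennreal (exp (- (fst p ^ 2 + snd p ^ 2)) * (fst p ^ 2 + snd p ^ 2) ^ m / pi)) \<in> borel_measurable lborel"
    proof -
      have "continuous_on UNIV (\<lambda>p::real\<times>real. exp (- (fst p ^ 2 + snd p ^ 2)) * (fst p ^ 2 + snd p ^ 2) ^ m / pi)"
        by (intro continuous_intros) auto
      from measurable_compose[OF cont_meas[OF this] measurable_ennreal] show ?thesis by simp
    qed
    show "(\<integral>\<^sup>+ p. ennreal ((cmod (c m))\<^sup>2) * ennreal (exp (- (fst p ^ 2 + snd p ^ 2)) * (fst p ^ 2 + snd p ^ 2) ^ m / pi) \<partial>lborel) = ennreal ((cmod (c m))\<^sup>2 * fact m)"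
      by (subst nn_integral_cmult[OF mm], subst radial_moment, simp add: ennreal_mult)
  qed
  finally show ?thesis using lhs by simp
qed


definition sdj :: "nat set \<Rightarrow> nat \<Rightarrow> nat set" where
  "sdj C j = (if j \<in> C then C - {j} else insert j C)"

definition sg :: "nat \<Rightarrow> nat set \<Rightarrow> real" where
  "sg j C = (-1) ^ card {k\<in>C. k < j} * (if j \<in> C then 1 else -1)"

lemma sdj_sdj[simp]: "sdj (sdj C j) j = C"
  unfolding sdj_def by auto

lemma sdj_comm: "sdj (sdj C j) k = sdj (sdj C k) j"
  unfolding sdj_def by auto

lemma sdj_Pow: "C \<subseteq> {1..n} \<Longrightarrow> j \<in> {1..n} \<Longrightarrow> sdj C j \<subseteq> {1..n}"
  unfolding sdj_def by auto

lemma finite_sdj: "finite C \<Longrightarrow> finite (sdj C j)"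
  unfolding sdj_def by auto

lemma card_pairs: "card {(i, k). i \<in> {j} \<and> k \<in> E \<and> k < i} = card {k\<in>E. k < j}"
proof -
  have "{(i, k). i \<in> {j} \<and> k \<in> E \<and> k < i} = Pair j ` {k\<in>E. k < j}" by auto
  moreover have "inj (Pair j)" by (auto simp: inj_def)
  ultimately show ?thesis by (simp add: card_image inj_on_def)
qed

lemma csign_sdj: "csign {j} (sdj C j) = sg j C"
proof -
  have e: "{k\<in>sdj C j. k < j} = {k\<in>C. k < j}" unfolding sdj_def by auto
  show ?thesis unfolding csign_def card_pairs e sg_def
    by (auto simp: sdj_def power_add)
qed

lemma sg_sdj_self: "sg j (sdj C j) = - sg j C"
proof -
  have e: "{k\<in>sdj C j. k < j} = {k\<in>C. k < j}" unfolding sdj_def by auto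
  show ?thesis unfolding sg_def e by (auto simp: sdj_def)
qed

lemma cnt_sdj:
  assumes "finite C" "j \<noteq> k"
  shows "(-1::real) ^ card {i\<in>sdj C j. i < k} = (-1) ^ card {i\<in>C. i < k} * (if j < k then -1 else 1)"
proof (cases "j < k")
  case False
  then have "{i\<in>sdj C j. i < k} = {i\<in>C. i < k}" using assms unfolding sdj_def by auto
  then show ?thesis using False by simp
next
  case True
  have fin: "finite {i\<in>C. i < k}" using assms by auto
  show ?thesis
  proof (cases "j \<in> C")
    case True': True
    have "{i\<in>sdj C j. i < k} = {i\<in>C. i < k} - {j}" using True' unfolding sdj_def by auto
    moreover have "card {i\<in>C. i < k} = Suc (card ({i\<in>C. i < k} - {j}))"
      using True True' fin by (intro card.remove) auto
    ultimately show ?thesis using True by simp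
  next
    case False
    have "{i\<in>sdj C j. i < k} = insert j {i\<in>C. i < k}" using False True unfolding sdj_def by auto
    then show ?thesis using True False fin by simp
  qed
qed

lemma sg_anti:
  assumes "finite C" "j \<noteq> k"
  shows "sg j C * sg k (sdj C j) = - (sg k C * sg j (sdj C k))"
proof -
  have m1: "(k \<in> sdj C j) = (k \<in> C)" "(j \<in> sdj C k) = (j \<in> C)" using assms unfolding sdj_def by auto
  have a: "sg k (sdj C j) = (-1) ^ card {i\<in>C. i < k} * (if j < k then -1 else 1) * (if k \<in> C then 1 else -1)"
    unfolding sg_def cnt_sdj[OF assms] m1 ..
  have b: "sg j (sdj C k) = (-1) ^ card {i\<in>C. i < j} * (if k < j then -1 else 1) * (if j \<in> C then 1 else -1)"
    unfolding sg_def cnt_sdj[OF assms(1) assms(2)[symmetric]] m1 ..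
  have c: "sg j C = (-1) ^ card {i\<in>C. i < j} * (if j \<in> C then 1 else -1)"
     "sg k C = (-1) ^ card {i\<in>C. i < k} * (if k \<in> C then 1 else -1)" unfolding sg_def by auto
  show ?thesis
  proof (cases "j < k")
    case True
    then have "\<not> k < j" by simp
    then show ?thesis unfolding a b c using True by (simp add: algebra_simps)
  next
    case False
    then have "k < j" using assms(2) by simp
    then show ?thesis unfolding a b c using False by (simp add: algebra_simps)
  qed
qed

lemma para0: "x 0 = 0 \<Longrightarrow> para n x A = (\<Sum>j=1..n. x j * (if A = {j} then 1 else 0))"
  unfolding para_def by simp

lemma symd_iff: "((({j}::nat set) - B) \<union> (B - {j}) = C) = (B = sdj C j)"
  unfolding sdj_def by auto

lemma cmult_para:
  assumes C: "C \<subseteq> {1..n}" and x0: "x 0 = 0"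
  shows "cmult n (para n x) b C = (\<Sum>j=1..n. x j * sg j C * b (sdj C j))"
proof -
  have "cmult n (para n x) b C = (\<Sum>A\<in>Pow {1..n}. \<Sum>B\<in>Pow {1..n}. \<Sum>j=1..n.
      if A = {j} then x j * (if (A - B) \<union> (B - A) = C then csign A B * b B else 0) else 0)"
    unfolding cmult_def para0[of x, OF x0]
  proof (intro sum.cong refl)
    fix A B
    show "(if A - B \<union> (B - A) = C then csign A B * (\<Sum>j = 1..n. x j * (if A = {j} then 1 else 0)) * b B else 0) =
         (\<Sum>j = 1..n. if A = {j} then x j * (if A - B \<union> (B - A) = C then csign A B * b B else 0) else 0)"
    proof (cases "A - B \<union> (B - A) = C")
      case True
      then show ?thesis
        by (simp add: sum_distrib_left sum_distrib_right) (intro sum.cong refl, auto)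
    next
      case False
      then show ?thesis by (simp add: sum.neutral)
    qed
  qed
  also have "\<dots> = (\<Sum>j=1..n. \<Sum>A\<in>Pow {1..n}. \<Sum>B\<in>Pow {1..n}.
      if A = {j} then x j * (if (A - B) \<union> (B - A) = C then csign A B * b B else 0) else 0)"
    by (subst sum.swap, rule sum.cong[OF refl], rule sum.swap)
  also have "\<dots> = (\<Sum>j=1..n. \<Sum>B\<in>Pow {1..n}. 
      x j * (if B = sdj C j then csign {j} B * b B else 0))"
  proof (rule sum.cong[OF refl])
    fix j assume j: "j \<in> {1..n}"
    have "(\<Sum>A\<in>Pow {1..n}. \<Sum>B\<in>Pow {1..n}.
      if A = {j} then x j * (if (A - B) \<union> (B - A) = C then csign A B * b B else 0) else 0)
      = (\<Sum>A\<in>Pow {1..n}. if A = {j} then (\<Sum>B\<in>Pow {1..n}. x j * (if (A - B) \<union> (B - A) = C then csign A B * b B else 0)) else 0)"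
      by (intro sum.cong refl) auto
    also have "\<dots> = (\<Sum>B\<in>Pow {1..n}. x j * (if ({j} - B) \<union> (B - {j}) = C then csign {j} B * b B else 0))"
      using j by (subst sum.delta) auto
    also have "\<dots> = (\<Sum>B\<in>Pow {1..n}. x j * (if B = sdj C j then csign {j} B * b B else 0))"
      unfolding symd_iff ..
    finally show "(\<Sum>A\<in>Pow {1..n}. \<Sum>B\<in>Pow {1..n}.
      if A = {j} then x j * (if (A - B) \<union> (B - A) = C then csign A B * b B else 0) else 0)
      = (\<Sum>B\<in>Pow {1..n}. x j * (if B = sdj C j then csign {j} B * b B else 0))" .
  qed
  also have "\<dots> = (\<Sum>j=1..n. x j * sg j C * b (sdj C j))"
  proof (rule sum.cong[OF refl])
    fix j assume j: "j \<in> {1..n}"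
    have "(\<Sum>B\<in>Pow {1..n}. x j * (if B = sdj C j then csign {j} B * b B else 0)) =
       x j * (\<Sum>B\<in>Pow {1..n}. (if B = sdj C j then csign {j} B * b B else 0))"
      by (simp only: sum_distrib_left)
    also have "\<dots> = x j * (csign {j} (sdj C j) * b (sdj C j))"
    proof -
      have "(\<Sum>B\<in>Pow {1..n}. (if B = sdj C j then csign {j} B * b B else 0)) = csign {j} (sdj C j) * b (sdj C j)"
        using sdj_Pow[OF C j] sum.delta[of "Pow {1..n}" "sdj C j" "\<lambda>B. csign {j} B * b B"] by simp
      then show ?thesis by simp
    qed
    finally show "(\<Sum>B\<in>Pow {1..n}. x j * (if B = sdj C j then csign {j} B * b B else 0)) =
       x j * sg j C * b (sdj C j)" by (simp add: csign_sdj)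
  qed
  finally show ?thesis .
qed

lemma sum_Pow_sdj:
  assumes j: "j \<in> {1..n}"
  shows "(\<Sum>C\<in>Pow {1..n}. g C) = (\<Sum>D\<in>Pow {1..n}. g (sdj D j))"
  by (rule sum.reindex_bij_witness[where i="\<lambda>C. sdj C j" and j="\<lambda>C. sdj C j"])
     (use j sdj_Pow in auto)

lemma cmult_skew:
  assumes x0: "x 0 = 0"
  shows "(\<Sum>C\<in>Pow {1..n}. cmult n (para n x) a C * b C) = - (\<Sum>C\<in>Pow {1..n}. a C * cmult n (para n x) b C)"
proof -
  have "(\<Sum>C\<in>Pow {1..n}. cmult n (para n x) a C * b C) =
        (\<Sum>C\<in>Pow {1..n}. \<Sum>j=1..n. x j * (sg j C * a (sdj C j) * b C))"
    by (intro sum.cong refl) (simp add: cmult_para[where x=x, OF _ x0] sum_distrib_right sum_distrib_left ac_simps)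
  also have "\<dots> = (\<Sum>j=1..n. x j * (\<Sum>C\<in>Pow {1..n}. sg j C * a (sdj C j) * b C))"
    by (subst sum.swap) (simp add: sum_distrib_left)
  also have "\<dots> = (\<Sum>j=1..n. x j * (\<Sum>D\<in>Pow {1..n}. sg j (sdj D j) * a (sdj (sdj D j) j) * b (sdj D j)))"
    by (intro sum.cong refl arg_cong2[where f="(*)"] sum_Pow_sdj) auto
  also have "\<dots> = - (\<Sum>j=1..n. x j * (\<Sum>D\<in>Pow {1..n}. sg j D * a D * b (sdj D j)))"
    by (simp add: sg_sdj_self sum_negf)
  also have "\<dots> = - (\<Sum>C\<in>Pow {1..n}. a C * cmult n (para n x) b C)"
  proof -
    have "(\<Sum>C\<in>Pow {1..n}. a C * cmult n (para n x) b C) = (\<Sum>C\<in>Pow {1..n}. \<Sum>j=1..n. x j * (sg j C * a C * b (sdj C j)))"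
      by (intro sum.cong refl) (simp add: cmult_para[where x=x, OF _ x0] sum_distrib_left ac_simps)
    also have "\<dots> = (\<Sum>j=1..n. x j * (\<Sum>D\<in>Pow {1..n}. sg j D * a D * b (sdj D j)))"
      by (subst sum.swap) (simp add: sum_distrib_left)
    finally show ?thesis by simp
  qed
  finally show ?thesis .
qed

lemma sg_sq: "sg j C * sg j C = 1"
  unfolding sg_def by (auto simp: power_mult_distrib[symmetric])

lemma cmult_MM:
  assumes C: "C \<subseteq> {1..n}" and x0: "x 0 = 0" and x1: "(\<Sum>j=1..n. (x j)^2) = 1"
  shows "cmult n (para n x) (cmult n (para n x) b) C = - b C"
proof -
  define T where "T j k = x j * x k * (sg j C * sg k (sdj C j)) * b (sdj (sdj C j) k)" for j k
  have fin: "finite C" using C finite_subset by blast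
  have "cmult n (para n x) (cmult n (para n x) b) C = (\<Sum>j=1..n. \<Sum>k=1..n. T j k)"
    unfolding cmult_para[where x=x, OF C x0] T_def
    by (intro sum.cong refl)
       (simp add: cmult_para[where x=x, OF sdj_Pow[OF C] x0] sum_distrib_left sum_distrib_right ac_simps)
  also have "\<dots> = (\<Sum>j=1..n. \<Sum>k=1..n. (T j k + T k j) / 2)"
  proof -
    have "(\<Sum>j=1..n. \<Sum>k=1..n. T k j) = (\<Sum>j=1..n. \<Sum>k=1..n. T j k)"
      by (rule sum.swap)
    then show ?thesis by (simp add: sum.distrib sum_divide_distrib[symmetric])
  qed
  also have "\<dots> = (\<Sum>j=1..n. \<Sum>k=1..n. if j = k then T j j else 0)"
  proof (intro sum.cong refl)
    fix j k
    show "(T j k + T k j) / 2 = (if j = k then T j j else 0)"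
    proof (cases "j = k")
      case False
      have "T k j = - T j k" unfolding T_def
        using sg_anti[OF fin False] sdj_comm[of C j k] by (simp add: algebra_simps)
      then show ?thesis using False by simp
    qed simp
  qed
  also have "\<dots> = (\<Sum>j=1..n. T j j)" by simp
  also have "\<dots> = (\<Sum>j=1..n. - ((x j)^2 * b C))"
    unfolding T_def by (intro sum.cong refl) (simp add: sg_sdj_self power2_eq_square sg_sq)
  also have "\<dots> = - b C" using x1 by (simp add: sum_negf sum_distrib_right[symmetric])
  finally show ?thesis .
qed

lemma cmult_isom:
  assumes x0: "x 0 = 0" and x1: "(\<Sum>j=1..n. (x j)^2) = 1"
  shows "cnorm2 n (cmult n (para n x) a) = cnorm2 n a"
proof -
  have "cnorm2 n (cmult n (para n x) a) = (\<Sum>C\<in>Pow {1..n}. cmult n (para n x) a C * cmult n (para n x) a C)"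
    unfolding cnorm2_def by (simp add: power2_eq_square)
  also have "\<dots> = - (\<Sum>C\<in>Pow {1..n}. a C * cmult n (para n x) (cmult n (para n x) a) C)"
    by (rule cmult_skew[where x=x, OF x0])
  also have "\<dots> = (\<Sum>C\<in>Pow {1..n}. a C * a C)"
    by (simp add: cmult_MM[where x=x, OF _ x0 x1] sum_negf[symmetric])
  finally show ?thesis unfolding cnorm2_def by (simp add: power2_eq_square)
qed

lemma cmult_out: "\<not> C \<subseteq> {1..n} \<Longrightarrow> cmult n a b C = 0"
  unfolding cmult_def by (intro sum.neutral ballI) auto

lemma cmult_lin_left:
  "cmult n (\<lambda>A. s * p A + t * q A) b C = s * cmult n p b C + t * cmult n q b C"
  unfolding cmult_def
  by (simp add: sum_distrib_left sum.distrib[symmetric] if_distrib algebra_simps cong: if_cong)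

lemma cmult_lin_right:
  "cmult n a (\<lambda>A. s * p A + t * q A) C = s * cmult n a p C + t * cmult n a q C"
  unfolding cmult_def
  by (simp add: sum_distrib_left sum.distrib[symmetric] if_distrib algebra_simps cong: if_cong)

lemma csign_empty: "csign {} B = 1" "csign A {} = 1"
  unfolding csign_def by simp_all

lemma cmult_cone_left:
  assumes C: "C \<subseteq> {1..n}"
  shows "cmult n cone b C = b C"
proof -
  have "cmult n cone b C = (\<Sum>A\<in>Pow {1..n}. if A = {} then (\<Sum>B\<in>Pow {1..n}. if B = C then b B else 0) else 0)"
    unfolding cmult_def cone_def
  proof (rule sum.cong[OF refl])
    fix A assume "A \<in> Pow {1..n}"
    show "(\<Sum>B\<in>Pow {1..n}. if A - B \<union> (B - A) = C then csign A B * (if A = {} then 1 else 0) * b B else 0)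
      = (if A = {} then (\<Sum>B\<in>Pow {1..n}. if B = C then b B else 0) else 0)"
    proof (cases "A = {}")
      case True
      then show ?thesis by (simp add: csign_empty)
    next
      case False
      then show ?thesis by (simp cong: if_cong)
    qed
  qed
  also have "\<dots> = b C" using C by (simp add: sum.delta)
  finally show ?thesis .
qed

lemma cmult_cone_right:
  assumes C: "C \<subseteq> {1..n}"
  shows "cmult n a cone C = a C"
proof -
  have "cmult n a cone C = (\<Sum>A\<in>Pow {1..n}. if A = C then a A else 0)"
    unfolding cmult_def cone_def
  proof (rule sum.cong[OF refl])
    fix A assume "A \<in> Pow {1..n}"
    have "(\<Sum>B\<in>Pow {1..n}. if A - B \<union> (B - A) = C then csign A B * a A * (if B = {} then 1 else 0) else 0)
        = (\<Sum>B\<in>Pow {1..n}. if B = {} then (if A = C then a A else 0) else 0)"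
      by (intro sum.cong refl) (auto simp: csign_empty)
    also have "\<dots> = (if A = C then a A else 0)" by (simp add: sum.delta)
    finally show "(\<Sum>B\<in>Pow {1..n}. if A - B \<union> (B - A) = C then csign A B * a A * (if B = {} then 1 else 0) else 0)
        = (if A = C then a A else 0)" .
  qed
  also have "\<dots> = a C" using C by (simp add: sum.delta)
  finally show ?thesis .
qed


lemma para_out: "x 0 = 0 \<Longrightarrow> \<not> A \<subseteq> {1..n} \<Longrightarrow> para n x A = 0"
  by (subst para0[of x]) (auto intro!: sum.neutral)

lemma M_cone: "x 0 = 0 \<Longrightarrow> cmult n (para n x) cone = para n x"
proof
  fix C assume x0: "x 0 = 0"
  show "cmult n (para n x) cone C = para n x C"
    by (cases "C \<subseteq> {1..n}") (simp_all add: cmult_cone_right cmult_out para_out[of x, OF x0])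
qed

lemma M_I:
  assumes x0: "x 0 = 0" and x1: "(\<Sum>j=1..n. (x j)^2) = 1" and C: "C \<subseteq> {1..n}"
  shows "cmult n (para n x) (para n x) C = - cone C"
  using cmult_MM[where x=x, OF C x0 x1, of cone] M_cone[of x n, OF x0] by simp

lemma slicept_para:
  assumes x0: "x 0 = 0"
  shows "slicept (para n x) u v = para n (\<lambda>j. if j = 0 then u else v * x j)"
proof
  fix A
  have "(\<Sum>j = 1..n. (if j = 0 then u else v * x j) * (if A = {j} then 1 else 0)) = v * (\<Sum>j = 1..n. x j * (if A = {j} then 1 else 0))"
    by (simp add: sum_distrib_left ac_simps)
  then show "slicept (para n x) u v A = para n (\<lambda>j. if j = 0 then u else v * x j) A"
    unfolding slicept_def para_def cone_def using x0 by simp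
qed

lemma cone_out: "\<not> A \<subseteq> {1..n} \<Longrightarrow> cone A = 0"
  unfolding cone_def by auto

lemma cmult_sl:
  assumes x0: "x 0 = 0" and x1: "(\<Sum>j=1..n. (x j)^2) = 1"
  shows "cmult n (slicept (para n x) u v) (slicept (para n x) p q) = slicept (para n x) (u * p - v * q) (u * q + v * p)"
proof
  fix C
  let ?I = "para n x"
  show "cmult n (slicept ?I u v) (slicept ?I p q) C = slicept ?I (u * p - v * q) (u * q + v * p) C"
  proof (cases "C \<subseteq> {1..n}")
    case True
    have "cmult n (slicept ?I u v) (slicept ?I p q) C = u * cmult n cone (slicept ?I p q) C + v * cmult n ?I (slicept ?I p q) C"
      unfolding slicept_def[of ?I u v] by (rule cmult_lin_left)
    also have "cmult n cone (slicept ?I p q) C = slicept ?I p q C" by (rule cmult_cone_left[OF True])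
    also have "cmult n ?I (slicept ?I p q) C = p * cmult n ?I cone C + q * cmult n ?I ?I C"
      unfolding slicept_def[of ?I p q] by (rule cmult_lin_right)
    also have "cmult n ?I cone C = ?I C" by (simp add: M_cone[of x n, OF x0])
    also have "cmult n ?I ?I C = - cone C" by (rule M_I[OF x0 x1 True])
    finally show ?thesis unfolding slicept_def by (simp add: algebra_simps)
  next
    case False
    then show ?thesis
      by (simp add: cmult_out slicept_def cone_out para_out[of x, OF x0])
  qed
qed

lemma cpow_sl:
  assumes x0: "x 0 = 0" and x1: "(\<Sum>j=1..n. (x j)^2) = 1"
  shows "cpow n (slicept (para n x) u v) m = slicept (para n x) (Re (Complex u v ^ m)) (Im (Complex u v ^ m))"
proof (induction m)
  case 0
  then show ?case unfolding cpow_def slicept_def by simp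
next
  case (Suc m)
  have "cpow n (slicept (para n x) u v) (Suc m) = cmult n (slicept (para n x) u v) (cpow n (slicept (para n x) u v) m)"
    unfolding cpow_def by simp
  also have "\<dots> = slicept (para n x) (Re (Complex u v ^ Suc m)) (Im (Complex u v ^ Suc m))"
    unfolding Suc.IH cmult_sl[OF x0 x1] by simp
  finally show ?case .
qed

lemma cmult_sl_a:
  assumes C: "C \<subseteq> {1..n}"
  shows "cmult n (slicept I p q) a C = p * a C + q * cmult n I a C"
  unfolding slicept_def cmult_lin_left cmult_cone_left[OF C] ..

lemma pair_norm:
  assumes x0: "x 0 = 0" and x1: "(\<Sum>j=1..n. (x j)^2) = 1"
  shows "(\<Sum>A\<in>Pow {1..n}. (X A + cmult n (para n x) Y A)\<^sup>2 + (Y A - cmult n (para n x) X A)\<^sup>2)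
       = 2 * (\<Sum>A\<in>Pow {1..n}. (X A + cmult n (para n x) Y A)\<^sup>2)"
proof -
  let ?M = "cmult n (para n x)"
  have iX: "(\<Sum>A\<in>Pow {1..n}. (?M X A)\<^sup>2) = (\<Sum>A\<in>Pow {1..n}. (X A)\<^sup>2)"
    using cmult_isom[where x=x, OF x0 x1, of X] unfolding cnorm2_def .
  have iY: "(\<Sum>A\<in>Pow {1..n}. (?M Y A)\<^sup>2) = (\<Sum>A\<in>Pow {1..n}. (Y A)\<^sup>2)"
    using cmult_isom[where x=x, OF x0 x1, of Y] unfolding cnorm2_def .
  have sk: "(\<Sum>A\<in>Pow {1..n}. ?M X A * Y A) = - (\<Sum>A\<in>Pow {1..n}. X A * ?M Y A)"
    by (rule cmult_skew[where x=x, OF x0])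
  have "(\<Sum>A\<in>Pow {1..n}. (X A + ?M Y A)\<^sup>2 + (Y A - ?M X A)\<^sup>2) =
     (\<Sum>A\<in>Pow {1..n}. (X A)\<^sup>2) + 2 * (\<Sum>A\<in>Pow {1..n}. X A * ?M Y A) + (\<Sum>A\<in>Pow {1..n}. (?M Y A)\<^sup>2)
     + (\<Sum>A\<in>Pow {1..n}. (Y A)\<^sup>2) - 2 * (\<Sum>A\<in>Pow {1..n}. ?M X A * Y A) + (\<Sum>A\<in>Pow {1..n}. (?M X A)\<^sup>2)"
    by (simp add: power2_diff power2_sum sum.distrib sum_subtractf sum_distrib_left algebra_simps)
  also have "\<dots> = 2 * ((\<Sum>A\<in>Pow {1..n}. (X A)\<^sup>2) + 2 * (\<Sum>A\<in>Pow {1..n}. X A * ?M Y A) + (\<Sum>A\<in>Pow {1..n}. (?M Y A)\<^sup>2))"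
    unfolding iX iY sk by simp
  also have "(\<Sum>A\<in>Pow {1..n}. (X A)\<^sup>2) + 2 * (\<Sum>A\<in>Pow {1..n}. X A * ?M Y A) + (\<Sum>A\<in>Pow {1..n}. (?M Y A)\<^sup>2)
     = (\<Sum>A\<in>Pow {1..n}. (X A + ?M Y A)\<^sup>2)"
    by (simp add: power2_sum sum.distrib sum_distrib_left algebra_simps)
  finally show ?thesis .
qed


theorem mainTheorem10:
  fixes n :: nat and I :: cliff and f :: "cliff \<Rightarrow> cliff" and a :: "nat \<Rightarrow> cliff"
  assumes "I \<in> sphS n"
    and "\<forall>m. cliff_el n (a m)"
    and "slice_monogenic n f"
    and "\<forall>x A. (\<lambda>m. cmult n (cpow n (para n x) m) (a m) A) sums (f (para n x) A)"
  shows "fock n I f \<longleftrightarrow> summable (\<lambda>m. cnorm2 n (a m) * fact m)"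
proof -
  obtain x where x0: "x 0 = 0" and x1: "(\<Sum>j=1..n. (x j)^2) = 1" and Ix: "I = para n x"
    using assms(1) unfolding sphS_def by auto
  let ?M = "cmult n I"
  have hyp: "(\<lambda>m. cmult n (cpow n (slicept I u v) m) (a m) A) sums (f (slicept I u v) A)" for u v A
    using assms(4) unfolding Ix slicept_para[of x, OF x0] by blast
  have tm: "cmult n (cpow n (slicept I u v) m) (a m) A = Re (Complex u v ^ m) * a m A + Im (Complex u v ^ m) * ?M (a m) A"
    if A: "A \<subseteq> {1..n}" for u v m A
    unfolding Ix cpow_sl[OF x0 x1] by (rule cmult_sl_a[OF A])
  have realsum: "summable (\<lambda>m. a m A * r ^ m)" if A: "A \<subseteq> {1..n}" for A r
  proof -
    have "summable (\<lambda>m. cmult n (cpow n (slicept I r 0) m) (a m) A)"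
      by (rule sums_summable[OF hyp])
    moreover have "cmult n (cpow n (slicept I r 0) m) (a m) A = a m A * r ^ m" for m
    proof -
      have "Complex r 0 ^ m = complex_of_real (r ^ m)" by (simp add: complex_of_real_def[symmetric])
      then show ?thesis unfolding tm[OF A] by simp
    qed
    ultimately show ?thesis by simp
  qed
  have csum: "summable (\<lambda>m. complex_of_real (a m A) * w ^ m)" if A: "A \<subseteq> {1..n}" for A w
  proof -
    define R where "R = norm w + 1"
    have "summable (\<lambda>m. complex_of_real (a m A * R ^ m))"
      using realsum[OF A, of R] by (simp only: summable_complex_of_real)
    then have "summable (\<lambda>m. complex_of_real (a m A) * complex_of_real R ^ m)"
      by simp
    then show ?thesis by (rule powser_inside) (simp add: R_def)
  qed
  have Mexp: "?M b A = (\<Sum>j=1..n. x j * sg j A * b (sdj A j))" if A: "A \<subseteq> {1..n}" for A b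
    unfolding Ix by (rule cmult_para[where x=x, OF A x0])
  have Msum: "summable (\<lambda>m. complex_of_real (?M (a m) A) * w ^ m)" if A: "A \<subseteq> {1..n}" for A w
  proof -
    have "summable (\<lambda>m. \<Sum>j=1..n. complex_of_real (x j * sg j A) * (complex_of_real (a m (sdj A j)) * w ^ m))"
      by (intro summable_sum summable_mult csum sdj_Pow[OF A]) auto
    moreover have "complex_of_real (?M (a m) A) * w ^ m = (\<Sum>j=1..n. complex_of_real (x j * sg j A) * (complex_of_real (a m (sdj A j)) * w ^ m))" for m
      unfolding Mexp[OF A] by (simp add: sum_distrib_right sum_distrib_left ac_simps)
    ultimately show ?thesis by simp
  qed
  define ca where "ca A m = complex_of_real (a m A) - \<i> * complex_of_real (?M (a m) A)" for A m
  have S: "summable (\<lambda>m. ca A m * w ^ m)" if A: "A \<subseteq> {1..n}" for A w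
  proof -
    have "summable (\<lambda>m. complex_of_real (a m A) * w ^ m - \<i> * (complex_of_real (?M (a m) A) * w ^ m))"
      by (intro summable_diff summable_mult csum[OF A] Msum[OF A])
    then show ?thesis unfolding ca_def by (simp add: algebra_simps)
  qed
  define hA where "hA A w = (\<Sum>m. ca A m * w ^ m)" for A w
  have fRe: "f (slicept I u v) A = Re (hA A (Complex u v))" if A: "A \<subseteq> {1..n}" for A u v
  proof -
    have "(\<lambda>m. Re (ca A m * Complex u v ^ m)) sums Re (hA A (Complex u v))"
      unfolding hA_def by (rule sums_Re[OF summable_sums[OF S[OF A]]])
    moreover have "Re (ca A m * Complex u v ^ m) = cmult n (cpow n (slicept I u v) m) (a m) A" for m
      unfolding tm[OF A] ca_def by (simp add: algebra_simps)
    ultimately have "(\<lambda>m. cmult n (cpow n (slicept I u v) m) (a m) A) sums Re (hA A (Complex u v))" by simp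
    then show ?thesis using hyp sums_unique2 by blast
  qed
  have normid: "cnorm2 n (f (slicept I u v)) = (\<Sum>A\<in>Pow {1..n}. (cmod (hA A (Complex u v)))\<^sup>2) / 2" for u v
  proof -
    define z where "z = Complex u v"
    define s where "s B = (\<Sum>m. complex_of_real (a m B) * z ^ m)" for B
    define X where "X B = Re (s B)" for B
    define Y where "Y B = Im (s B)" for B
    have hs: "hA A z = s A - \<i> * (\<Sum>j=1..n. complex_of_real (x j * sg j A) * s (sdj A j))" if A: "A \<subseteq> {1..n}" for A
    proof -
      have e: "ca A m * z ^ m = complex_of_real (a m A) * z ^ m - \<i> * (\<Sum>j=1..n. complex_of_real (x j * sg j A) * (complex_of_real (a m (sdj A j)) * z ^ m))" for m
        unfolding ca_def Mexp[OF A] by (simp add: sum_distrib_right sum_distrib_left algebra_simps)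
      have s1: "summable (\<lambda>m. complex_of_real (a m (sdj A j)) * z ^ m)" if "j \<in> {1..n}" for j
        by (rule csum[OF sdj_Pow[OF A that]])
      have "hA A z = (\<Sum>m. complex_of_real (a m A) * z ^ m - \<i> * (\<Sum>j=1..n. complex_of_real (x j * sg j A) * (complex_of_real (a m (sdj A j)) * z ^ m)))"
        unfolding hA_def e ..
      also have "\<dots> = s A - \<i> * (\<Sum>m. \<Sum>j=1..n. complex_of_real (x j * sg j A) * (complex_of_real (a m (sdj A j)) * z ^ m))"
      proof -
        have sT: "summable (\<lambda>m. \<Sum>j=1..n. complex_of_real (x j * sg j A) * (complex_of_real (a m (sdj A j)) * z ^ m))"
          by (intro summable_sum summable_mult s1)
        have "(\<Sum>m. complex_of_real (a m A) * z ^ m - \<i> * (\<Sum>j=1..n. complex_of_real (x j * sg j A) * (complex_of_real (a m (sdj A j)) * z ^ m)))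
          = (\<Sum>m. complex_of_real (a m A) * z ^ m) - (\<Sum>m. \<i> * (\<Sum>j=1..n. complex_of_real (x j * sg j A) * (complex_of_real (a m (sdj A j)) * z ^ m)))"
          by (rule suminf_diff[symmetric]) (intro csum[OF A], intro summable_mult sT)
        also have "(\<Sum>m. \<i> * (\<Sum>j=1..n. complex_of_real (x j * sg j A) * (complex_of_real (a m (sdj A j)) * z ^ m)))
           = \<i> * (\<Sum>m. \<Sum>j=1..n. complex_of_real (x j * sg j A) * (complex_of_real (a m (sdj A j)) * z ^ m))"
          by (rule suminf_mult[OF sT])
        finally show ?thesis unfolding s_def .
      qed
      also have "(\<Sum>m. \<Sum>j=1..n. complex_of_real (x j * sg j A) * (complex_of_real (a m (sdj A j)) * z ^ m))
          = (\<Sum>j=1..n. complex_of_real (x j * sg j A) * s (sdj A j))"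
      proof -
        have "(\<Sum>m. \<Sum>j=1..n. complex_of_real (x j * sg j A) * (complex_of_real (a m (sdj A j)) * z ^ m))
          = (\<Sum>j=1..n. \<Sum>m. complex_of_real (x j * sg j A) * (complex_of_real (a m (sdj A j)) * z ^ m))"
          by (rule suminf_sum) (intro summable_mult s1, simp)
        also have "\<dots> = (\<Sum>j=1..n. complex_of_real (x j * sg j A) * s (sdj A j))"
          unfolding s_def by (intro sum.cong refl suminf_mult s1)
        finally show ?thesis .
      qed
      finally show ?thesis .
    qed
    have reh: "Re (hA A z) = X A + ?M Y A" and imh: "Im (hA A z) = Y A - ?M X A" if A: "A \<subseteq> {1..n}" for A
      unfolding hs[OF A] Mexp[OF A] X_def Y_def by (simp_all add: Re_sum Im_sum)
    have "(\<Sum>A\<in>Pow {1..n}. (cmod (hA A z))\<^sup>2) = (\<Sum>A\<in>Pow {1..n}. (X A + ?M Y A)\<^sup>2 + (Y A - ?M X A)\<^sup>2)"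
      by (intro sum.cong refl) (simp add: cmod_power2 reh imh)
    also have "\<dots> = 2 * (\<Sum>A\<in>Pow {1..n}. (X A + ?M Y A)\<^sup>2)"
      unfolding Ix by (rule pair_norm[OF x0 x1])
    also have "(\<Sum>A\<in>Pow {1..n}. (X A + ?M Y A)\<^sup>2) = cnorm2 n (f (slicept I u v))"
      unfolding cnorm2_def z_def by (intro sum.cong refl) (simp add: fRe reh[unfolded z_def])
    finally show ?thesis unfolding z_def by simp
  qed
  have coefid: "(\<Sum>A\<in>Pow {1..n}. (cmod (ca A m))\<^sup>2) = 2 * cnorm2 n (a m)" for m
  proof -
    have "(\<Sum>A\<in>Pow {1..n}. (cmod (ca A m))\<^sup>2) = cnorm2 n (a m) + cnorm2 n (?M (a m))"
      unfolding cnorm2_def ca_def by (simp add: cmod_power2 sum.distrib)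
    also have "cnorm2 n (?M (a m)) = cnorm2 n (a m)"
      unfolding Ix by (rule cmult_isom[OF x0 x1])
    finally show ?thesis by simp
  qed
  define G where "G A p = ennreal (exp (- (fst p ^ 2 + snd p ^ 2)) * (cmod (\<Sum>m. ca A m * (Complex (fst p) (snd p)) ^ m))\<^sup>2 / pi)" for A p
  have Gm: "G A \<in> borel_measurable lborel" if A: "A \<subseteq> {1..n}" for A
  proof -
    have hc: "continuous_on UNIV (\<lambda>w. \<Sum>m. ca A m * w ^ m)"
      by (intro continuous_at_imp_continuous_on ballI isCont_powser_converges_everywhere S[OF A])
    have "continuous_on UNIV (\<lambda>p::real\<times>real. exp (- (fst p ^ 2 + snd p ^ 2)) * (cmod (\<Sum>m. ca A m * (Complex (fst p) (snd p)) ^ m))\<^sup>2 / pi)"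
      by (intro continuous_intros continuous_on_compose2[OF hc Complex_pair_cont]) auto
    from measurable_compose[OF cont_meas[OF this] measurable_ennreal] show ?thesis
      unfolding G_def by simp
  qed
  have GI: "(\<integral>\<^sup>+ p. G A p \<partial>lborel) = (\<Sum>m. ennreal ((cmod (ca A m))\<^sup>2 * fact m))" if A: "A \<subseteq> {1..n}" for A
    unfolding G_def by (rule complex_fock[OF S[OF A]])
  have pt: "ennreal (exp (- (fst p ^ 2 + snd p ^ 2)) * cnorm2 n (f (slicept I (fst p) (snd p))) / pi)
      = (\<Sum>A\<in>Pow {1..n}. ennreal (1/2) * G A p)" for p
  proof -
    have "exp (- (fst p ^ 2 + snd p ^ 2)) * cnorm2 n (f (slicept I (fst p) (snd p))) / pi
        = (\<Sum>A\<in>Pow {1..n}. (1/2) * (exp (- (fst p ^ 2 + snd p ^ 2)) * (cmod (hA A (Complex (fst p) (snd p))))\<^sup>2 / pi))"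
      unfolding normid by (simp add: sum_distrib_left sum_divide_distrib algebra_simps)
    also have "ennreal \<dots> = (\<Sum>A\<in>Pow {1..n}. ennreal ((1/2) * (exp (- (fst p ^ 2 + snd p ^ 2)) * (cmod (hA A (Complex (fst p) (snd p))))\<^sup>2 / pi)))"
      by (rule sum_ennreal[symmetric]) simp
    also have "\<dots> = (\<Sum>A\<in>Pow {1..n}. ennreal (1/2) * G A p)"
      unfolding G_def hA_def by (intro sum.cong refl) (subst ennreal_mult'[symmetric], simp_all)
    finally show ?thesis .
  qed
  have integ: "(\<integral>\<^sup>+ p. ennreal (exp (- (fst p ^ 2 + snd p ^ 2)) * cnorm2 n (f (slicept I (fst p) (snd p))) / pi) \<partial>lborel)
      = (\<Sum>m. ennreal (cnorm2 n (a m) * fact m))"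
  proof -
    have "(\<integral>\<^sup>+ p. ennreal (exp (- (fst p ^ 2 + snd p ^ 2)) * cnorm2 n (f (slicept I (fst p) (snd p))) / pi) \<partial>lborel)
        = (\<integral>\<^sup>+ p. (\<Sum>A\<in>Pow {1..n}. ennreal (1/2) * G A p) \<partial>lborel)"
      unfolding pt ..
    also have "\<dots> = (\<Sum>A\<in>Pow {1..n}. ennreal (1/2) * (\<integral>\<^sup>+ p. G A p \<partial>lborel))"
    proof -
      have m: "(\<lambda>p. ennreal (1/2) * G A p) \<in> borel_measurable lborel" if "A \<in> Pow {1..n}" for A
        using Gm[of A] that by (intro borel_measurable_times_ennreal borel_measurable_const) auto
      have "(\<integral>\<^sup>+ p. (\<Sum>A\<in>Pow {1..n}. ennreal (1/2) * G A p) \<partial>lborel) = (\<Sum>A\<in>Pow {1..n}. \<integral>\<^sup>+ p. ennreal (1/2) * G A p \<partial>lborel)"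
        by (rule nn_integral_sum) (use m in auto)
      also have "\<dots> = (\<Sum>A\<in>Pow {1..n}. ennreal (1/2) * (\<integral>\<^sup>+ p. G A p \<partial>lborel))"
        by (intro sum.cong refl nn_integral_cmult) (use Gm in auto)
      finally show ?thesis .
    qed
    also have "\<dots> = (\<Sum>A\<in>Pow {1..n}. ennreal (1/2) * (\<Sum>m. ennreal ((cmod (ca A m))\<^sup>2 * fact m)))"
      by (intro sum.cong refl) (simp add: GI)
    also have "\<dots> = ennreal (1/2) * (\<Sum>m. \<Sum>A\<in>Pow {1..n}. ennreal ((cmod (ca A m))\<^sup>2 * fact m))"
      by (simp only: sum_distrib_left[symmetric] suminf_sum[OF summableI])
    also have "\<dots> = ennreal (1/2) * (\<Sum>m. ennreal (2 * (cnorm2 n (a m) * fact m)))"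
    proof -
      have "(\<Sum>A\<in>Pow {1..n}. ennreal ((cmod (ca A m))\<^sup>2 * fact m)) = ennreal (2 * (cnorm2 n (a m) * fact m))" for m
      proof -
        have "(\<Sum>A\<in>Pow {1..n}. ennreal ((cmod (ca A m))\<^sup>2 * fact m)) = ennreal (\<Sum>A\<in>Pow {1..n}. (cmod (ca A m))\<^sup>2 * fact m)"
          by (rule sum_ennreal) simp
        also have "(\<Sum>A\<in>Pow {1..n}. (cmod (ca A m))\<^sup>2 * fact m) = 2 * (cnorm2 n (a m) * fact m)"
          using coefid[of m] by (simp add: sum_distrib_right[symmetric])
        finally show ?thesis .
      qed
      then show ?thesis by simp
    qed
    also have "\<dots> = (\<Sum>m. ennreal (cnorm2 n (a m) * fact m))"
    proof -
      have "ennreal (1/2) * ennreal (2 * (cnorm2 n (a m) * fact m)) = ennreal (cnorm2 n (a m) * fact m)" for m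
        by (subst ennreal_mult'[symmetric]; simp)
      then show ?thesis by (simp add: ennreal_suminf_cmult[symmetric])
    qed
    finally show ?thesis .
  qed
  have nonneg: "0 \<le> cnorm2 n (a m) * fact m" for m
    unfolding cnorm2_def by (intro mult_nonneg_nonneg sum_nonneg) auto
  show ?thesis
  proof
    assume "fock n I f"
    then have "(\<Sum>m. ennreal (cnorm2 n (a m) * fact m)) < \<infinity>"
      unfolding fock_def integ by simp
    then show "summable (\<lambda>m. cnorm2 n (a m) * fact m)"
      by (intro summable_suminf_not_top nonneg) simp
  next
    assume sm: "summable (\<lambda>m. cnorm2 n (a m) * fact m)"
    have "(\<Sum>m. ennreal (cnorm2 n (a m) * fact m)) < \<infinity>"
      using ennreal_suminf_neq_top[OF sm nonneg] by (simp add: top.not_eq_extremum)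
    then show "fock n I f"
      unfolding fock_def integ using assms(3) by simp
  qed
qed


end
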